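(* Let $a\in\mathbb{R}$, $\delta>0$, and let $N\in\mathbb{N}$ satisfy $a-(n\pi)^2<-\delta$ for all $n>N$. Suppose $L=[\ell_0\ \ell_1\ \ldots\ \ell_N]^\top\in\mathbb{R}^{N+1}$ is such that there exists a positive-definite $Q\in\mathbb{R}^{(N+1)\times(N+1)}$ with $$Q(A+LC)+(A+LC)^\top Q<-2\delta Q.$$ Then for any initial value $\tilde\epsilon(\cdot,0)\in L^2(0,1)$ there exists a unique solution $\tilde\epsilon\in C([0,\infty);L^2(0,1))$ of $$\tilde\epsilon_t=\tilde\epsilon_{xx}+a\tilde\epsilon+\mathcal L(x)\tilde\epsilon(0,t),\quad \tilde\epsilon_x(0,t)=0,\quad \tilde\epsilon_x(1,t)=0,$$ and there is $M_2>0$ such that $\|\tilde\epsilon(\cdot,t)\|_{L^2(0,1)}\le M_2e^{-\delta t}\|\tilde\epsilon(\cdot,0)\|_{L^2(0,1)}$ for all $t\ge0$.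
   Context: $\lambda_n=(n\pi)^2$, $\phi_0\equiv1$, $\phi_n(x)=\sqrt2\cos(n\pi x)$ ($n\ge1$); $A=\mathrm{diag}(a-\lambda_0,\ldots,a-\lambda_N)$, $C=[1\ \sqrt2\ \ldots\ \sqrt2]\in\mathbb{R}^{1\times(N+1)}$, and $\mathcal L(x)=\sum_{n=0}^N\ell_n\phi_n(x)$. *)

theory Defs
  imports "HOL-Analysis.Analysis"
begin

text \<open>Neumann eigenvalues and orthonormal eigenfunctions on (0,1).\<close>
definition lam :: "nat \<Rightarrow> real" where
  "lam n = (real n * pi)^2"

definition phi :: "nat \<Rightarrow> real \<Rightarrow> real" where
  "phi n x = (if n = 0 then 1 else sqrt 2 * cos (real n * pi * x))"

text \<open>Matrices of size (N+1)x(N+1) as functions nat => nat => real, indices 0..N.\<close>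
definition Amat :: "real \<Rightarrow> nat \<Rightarrow> nat \<Rightarrow> real" where
  "Amat a i j = (if i = j then a - lam i else 0)"

definition Cvec :: "nat \<Rightarrow> real" where
  "Cvec j = (if j = 0 then 1 else sqrt 2)"

definition ALC :: "real \<Rightarrow> (nat \<Rightarrow> real) \<Rightarrow> nat \<Rightarrow> nat \<Rightarrow> real" where
  "ALC a l i j = Amat a i j + l i * Cvec j"

definition mmul :: "nat \<Rightarrow> (nat \<Rightarrow> nat \<Rightarrow> real) \<Rightarrow> (nat \<Rightarrow> nat \<Rightarrow> real) \<Rightarrow> nat \<Rightarrow> nat \<Rightarrow> real" where
  "mmul N P R i j = (\<Sum>k\<le>N. P i k * R k j)"

definition transp_mat :: "(nat \<Rightarrow> nat \<Rightarrow> real) \<Rightarrow> nat \<Rightarrow> nat \<Rightarrow> real" where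
  "transp_mat P i j = P j i"

definition quad :: "nat \<Rightarrow> (nat \<Rightarrow> nat \<Rightarrow> real) \<Rightarrow> (nat \<Rightarrow> real) \<Rightarrow> real" where
  "quad N M x = (\<Sum>i\<le>N. \<Sum>j\<le>N. x i * M i j * x j)"

definition pos_def :: "nat \<Rightarrow> (nat \<Rightarrow> nat \<Rightarrow> real) \<Rightarrow> bool" where
  "pos_def N M \<longleftrightarrow> (\<forall>i\<le>N. \<forall>j\<le>N. M i j = M j i) \<and>
     (\<forall>x::nat \<Rightarrow> real. (\<exists>i\<le>N. x i \<noteq> 0) \<longrightarrow> quad N M x > 0)"

definition mat_less :: "nat \<Rightarrow> (nat \<Rightarrow> nat \<Rightarrow> real) \<Rightarrow> (nat \<Rightarrow> nat \<Rightarrow> real) \<Rightarrow> bool" where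
  "mat_less N X Y \<longleftrightarrow> pos_def N (\<lambda>i j. Y i j - X i j)"

definition Lfun :: "nat \<Rightarrow> (nat \<Rightarrow> real) \<Rightarrow> real \<Rightarrow> real" where
  "Lfun N l x = (\<Sum>n\<le>N. l n * phi n x)"

definition L2 :: "(real \<Rightarrow> real) \<Rightarrow> bool" where
  "L2 f \<longleftrightarrow> f measurable_on {0..1} \<and> (\<lambda>x. (f x)^2) integrable_on {0..1}"

definition L2norm :: "(real \<Rightarrow> real) \<Rightarrow> real" where
  "L2norm f = sqrt (integral {0..1} (\<lambda>x. (f x)^2))"

text \<open>Solution in C([0,\<infinity>); L^2(0,1)) of
  e_t = e_xx + a e + L(x) e(0,t),  e_x(0,t) = e_x(1,t) = 0,  e(.,0) = e0,
  in the modal (weak, tested against the Neumann eigenfunctions phi_n) sense.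
  The state is \<open>e x t\<close>.  For t > 0 the state is required to be continuous in x on [0,1]
  so that the point value e(0,t) is meaningful.\<close>
definition is_solution :: "real \<Rightarrow> nat \<Rightarrow> (nat \<Rightarrow> real) \<Rightarrow> (real \<Rightarrow> real) \<Rightarrow> (real \<Rightarrow> real \<Rightarrow> real) \<Rightarrow> bool" where
  "is_solution a N l e0 e \<longleftrightarrow>
     (\<forall>t\<ge>0. L2 (\<lambda>x. e x t)) \<and>
     (\<forall>t0\<ge>0. ((\<lambda>t. L2norm (\<lambda>x. e x t - e x t0)) \<longlongrightarrow> 0) (at t0 within {0..})) \<and>
     L2norm (\<lambda>x. e x 0 - e0 x) = 0 \<and>
     (\<forall>t>0. continuous_on {0..1} (\<lambda>x. e x t)) \<and>
     (\<forall>n. \<forall>t>0. ((\<lambda>s. integral {0..1} (\<lambda>x. e x s * phi n x)) has_real_derivative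
         (a - lam n) * integral {0..1} (\<lambda>x. e x t * phi n x)
         + e 0 t * integral {0..1} (\<lambda>x. Lfun N l x * phi n x)) (at t))"

end

theory Submission
  imports Defs
begin

lemma icm: "f integrable_on S \<Longrightarrow> (\<lambda>x. (c::real) * f x) integrable_on S"
  using integrable_on_cmult_left[of f S c] by simp

lemma int_abs_bound:
  fixes f g :: "real \<Rightarrow> real"
  assumes "f integrable_on S" "g integrable_on S" "\<And>x. x \<in> S \<Longrightarrow> \<bar>f x\<bar> \<le> g x"
  shows "\<bar>integral S f\<bar> \<le> integral S g"
  using integral_norm_bound_integral[OF assms(1,2)] assms(3) by simp

lemma sets_I[simp]: "{0..1::real} \<in> sets lebesgue" by simp

lemma L2_iff: "L2 f \<longleftrightarrow> f \<in> borel_measurable (lebesgue_on {0..1}) \<and> (\<lambda>x. (f x)^2) integrable_on {0..1}"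
  unfolding L2_def by (simp add: measurable_on_iff_borel_measurable)

lemma L2_meas: "L2 f \<Longrightarrow> f \<in> borel_measurable (lebesgue_on {0..1})"
  by (simp add: L2_iff)

lemma L2_sq: "L2 f \<Longrightarrow> (\<lambda>x. (f x)^2) integrable_on {0..1}"
  by (simp add: L2_iff)

lemma L2_mult_integrable:
  assumes "L2 f" "L2 g" shows "(\<lambda>x. f x * g x) integrable_on {0..1}"
proof (rule measurable_bounded_by_integrable_imp_integrable_real)
  show "(\<lambda>x. f x * g x) \<in> borel_measurable (lebesgue_on {0..1})"
    using assms by (simp add: L2_meas borel_measurable_times)
  show "(\<lambda>x. ((f x)^2 + (g x)^2)/2) integrable_on {0..1}"
    using assms by (intro integrable_on_divide integrable_add L2_sq)
  show "\<bar>f x * g x\<bar> \<le> ((f x)^2 + (g x)^2)/2" for x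
  proof -
    have "0 \<le> (\<bar>f x\<bar> - \<bar>g x\<bar>)^2" by simp
    then show ?thesis by (simp add: power2_eq_square abs_mult algebra_simps)
  qed
qed simp

lemma L2_add: "L2 f \<Longrightarrow> L2 g \<Longrightarrow> L2 (\<lambda>x. f x + g x)"
  unfolding L2_iff power2_sum
  by (auto intro!: integrable_add L2_mult_integrable icm simp: L2_iff mult.assoc)

lemma L2_cmult: "L2 f \<Longrightarrow> L2 (\<lambda>x. c * f x)"
  unfolding L2_iff power_mult_distrib
  by (auto intro!: icm borel_measurable_times)

lemma L2_minus: "L2 f \<Longrightarrow> L2 (\<lambda>x. - f x)"
  using L2_cmult[of f "-1"] by simp

lemma L2_diff: "L2 f \<Longrightarrow> L2 g \<Longrightarrow> L2 (\<lambda>x. f x - g x)"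
  using L2_add[of f "\<lambda>x. - g x"] L2_minus[of g] by simp

lemma L2_sum: "finite A \<Longrightarrow> (\<And>i. i \<in> A \<Longrightarrow> L2 (f i)) \<Longrightarrow> L2 (\<lambda>x. \<Sum>i\<in>A. f i x)"
proof (induction A rule: finite_induct)
  case empty
  then show ?case by (simp add: L2_iff integrable_0)
next
  case (insert a A)
  then show ?case by (simp add: L2_add)
qed

lemma L2_cont: "continuous_on {0..1} f \<Longrightarrow> L2 f"
  unfolding L2_iff
  by (auto intro!: integrable_continuous_interval continuous_intros integrable_imp_measurable)

lemma cont_phi: "continuous_on A (phi n)"
  unfolding phi_def[abs_def] by (cases "n = 0") (auto intro!: continuous_intros)

lemma L2_phi: "L2 (phi n)"
  by (rule L2_cont[OF cont_phi])

definition ip :: "(real \<Rightarrow> real) \<Rightarrow> (real \<Rightarrow> real) \<Rightarrow> real" where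
  "ip f g = integral {0..1} (\<lambda>x. f x * g x)"

lemma ip_comm: "ip f g = ip g f"
  unfolding ip_def by (simp add: mult.commute)

lemma ip_add: "L2 f \<Longrightarrow> L2 g \<Longrightarrow> L2 h \<Longrightarrow> ip (\<lambda>x. f x + g x) h = ip f h + ip g h"
  unfolding ip_def distrib_right
  by (intro integral_add L2_mult_integrable)

lemma ip_diff: "L2 f \<Longrightarrow> L2 g \<Longrightarrow> L2 h \<Longrightarrow> ip (\<lambda>x. f x - g x) h = ip f h - ip g h"
  unfolding ip_def left_diff_distrib
  by (intro integral_diff L2_mult_integrable)

lemma ip_cmult: "ip (\<lambda>x. c * f x) h = c * ip f h"
  unfolding ip_def by (simp add: mult.assoc)

lemma ip_sum: "finite A \<Longrightarrow> (\<And>i. i \<in> A \<Longrightarrow> L2 (f i)) \<Longrightarrow> L2 h \<Longrightarrow>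
   ip (\<lambda>x. \<Sum>i\<in>A. f i x) h = (\<Sum>i\<in>A. ip (f i) h)"
proof (induction A rule: finite_induct)
  case empty
  then show ?case by (simp add: ip_def)
next
  case (insert a A)
  then show ?case by (simp add: ip_add L2_sum)
qed

lemma ip_self_nonneg: "0 \<le> ip f f"
  unfolding ip_def
  by (cases "(\<lambda>x. f x * f x) integrable_on {0..1}") (auto intro: integral_nonneg simp: not_integrable_integral)

lemma ip_self: "ip f f = integral {0..1} (\<lambda>x. (f x)^2)"
  unfolding ip_def by (simp add: power2_eq_square)

lemma L2norm_ip: "L2norm f = sqrt (ip f f)"
  unfolding L2norm_def ip_self ..

lemma young_ip:
  assumes "L2 f" "L2 g" "e > 0"
  shows "\<bar>ip f g\<bar> \<le> (e * ip f f + ip g g / e) / 2"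
proof -
  have "\<bar>ip f g\<bar> \<le> integral {0..1} (\<lambda>x. (e * (f x * f x) + (g x * g x) / e) / 2)"
    unfolding ip_def
  proof (rule int_abs_bound)
    show "(\<lambda>x. f x * g x) integrable_on {0..1}" by (rule L2_mult_integrable[OF assms(1,2)])
    show "(\<lambda>x. (e * (f x * f x) + g x * g x / e) / 2) integrable_on {0..1}"
      using L2_mult_integrable[OF assms(1,1)] L2_mult_integrable[OF assms(2,2)]
      by (intro integrable_on_divide integrable_add icm) auto
    fix x
    have "0 \<le> (sqrt e * \<bar>f x\<bar> - \<bar>g x\<bar> / sqrt e)^2" by simp
    also have "\<dots> = e * (f x * f x) + g x * g x / e - 2 * \<bar>f x * g x\<bar>"
    proof -
      have se: "sqrt e * sqrt e = e" using assms(3) by simp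
      have "(sqrt e * \<bar>f x\<bar> - \<bar>g x\<bar> / sqrt e)^2 = (sqrt e * sqrt e) * (f x * f x) + g x * g x / (sqrt e * sqrt e) - 2 * (sqrt e / sqrt e) * \<bar>f x * g x\<bar>"
        by (simp add: power2_eq_square algebra_simps abs_mult abs_mult_self_eq)
      then show ?thesis using se assms(3) by simp
    qed
    finally show "\<bar>f x * g x\<bar> \<le> (e * (f x * f x) + g x * g x / e) / 2" by simp
  qed
  also have "\<dots> = (e * ip f f + ip g g / e) / 2"
    unfolding ip_def
    using L2_mult_integrable[OF assms(1,1)] L2_mult_integrable[OF assms(2,2)]
    by (simp add: integral_add integral_mult_right integral_divide
        icm integrable_on_divide)
  finally show ?thesis .
qed

lemma ip_zero_left:
  assumes "L2 f" "L2 g" "ip f f = 0" shows "ip f g = 0"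
proof -
  have "\<bar>ip f g\<bar> \<le> \<epsilon>" if "\<epsilon> > 0" for \<epsilon>
  proof -
    define e where "e = (ip g g + 1) / \<epsilon>"
    have B: "ip g g \<ge> 0" by (rule ip_self_nonneg)
    have e: "e > 0" using B that by (simp add: e_def)
    have "\<bar>ip f g\<bar> \<le> (e * ip f f + ip g g / e) / 2" by (rule young_ip[OF assms(1,2) e])
    also have "\<dots> = ip g g * \<epsilon> / (2 * (ip g g + 1))" using assms(3) that B by (simp add: e_def field_simps)
    also have "\<dots> \<le> \<epsilon>" using that B by (simp add: field_simps)
    finally show ?thesis .
  qed
  then have "\<bar>ip f g\<bar> \<le> 0" by (meson dense_le_bounded le_less_linear not_less)
  then show ?thesis by simp
qed

lemma cauchy_schwarz_ip:
  assumes "L2 f" "L2 g"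
  shows "\<bar>ip f g\<bar> \<le> sqrt (ip f f) * sqrt (ip g g)"
proof -
  let ?A = "ip f f" and ?B = "ip g g"
  have A: "?A \<ge> 0" and B: "?B \<ge> 0" by (rule ip_self_nonneg)+
  show ?thesis
  proof (cases "?A = 0 \<or> ?B = 0")
    case True
    then have "ip f g = 0" using ip_zero_left[OF assms] ip_zero_left[OF assms(2,1)] ip_comm[of f g] by auto
    then show ?thesis by (simp add: ip_self_nonneg)
  next
    case False
    then have A': "?A > 0" and B': "?B > 0" using A B by auto
    define e where "e = sqrt ?B / sqrt ?A"
    have e: "e > 0" using A' B' by (simp add: e_def)
    have "\<bar>ip f g\<bar> \<le> (e * ?A + ?B / e) / 2" by (rule young_ip[OF assms e])
    also have "e * ?A = sqrt ?B * sqrt ?A"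
      using A' by (simp add: e_def field_simps)
    also have "?B / e = sqrt ?B * sqrt ?A"
      using A' B' by (simp add: e_def field_simps)
    finally show ?thesis by simp
  qed
qed

lemma cos_int_nat:
  fixes k :: nat
  shows "integral {0..1} (\<lambda>x. cos (real k * pi * x)) = (if k = 0 then 1 else 0)"
proof (cases "k = 0")
  case True then show ?thesis by simp
next
  case False
  have "((\<lambda>x. cos (real k * pi * x)) has_integral (sin (real k * pi * 1) / (real k * pi) - sin (real k * pi * 0) / (real k * pi))) {0..1}"
  proof (rule fundamental_theorem_of_calculus)
    fix x :: real
    show "((\<lambda>x. sin (real k * pi * x) / (real k * pi)) has_vector_derivative cos (real k * pi * x)) (at x within {0..1})"
      using False by (auto intro!: derivative_eq_intros simp: has_real_derivative_iff_has_vector_derivative[symmetric])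
  qed simp
  moreover have "sin (real k * pi) = 0" by (simp add: sin_npi)
  ultimately show ?thesis using False by (simp add: integral_unique)
qed

lemma cos_prod: "cos x * cos y = (cos (x - y) + cos (x + y)) / (2::real)"
  by (simp add: cos_diff cos_add)

lemma cos_int_diff:
  fixes m n :: nat
  shows "(\<lambda>x. cos ((real m - real n) * pi * x)) = (\<lambda>x. cos (real (if m \<ge> n then m - n else n - m) * pi * x))"
proof
  fix x
  show "cos ((real m - real n) * pi * x) = cos (real (if m \<ge> n then m - n else n - m) * pi * x)"
  proof (cases "m \<ge> n")
    case True then show ?thesis by (simp add: of_nat_diff)
  next
    case False
    then have "(real m - real n) * pi * x = - (real (n - m) * pi * x)" by (simp add: of_nat_diff algebra_simps)
    then show ?thesis using False by (simp only: cos_minus) simp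
  qed
qed

lemma int_cos_cos:
  fixes m n :: nat
  shows "integral {0..1} (\<lambda>x. cos (real m * pi * x) * cos (real n * pi * x)) =
     (if m = n then (if m = 0 then 1 else 1/2) else 0)"
proof -
  define d where "d = (if m \<ge> n then m - n else n - m)"
  have d0: "d = 0 \<longleftrightarrow> m = n" unfolding d_def by auto
  have eq: "(\<lambda>x. cos (real m * pi * x) * cos (real n * pi * x)) =
    (\<lambda>x. (cos (real d * pi * x) + cos (real (m + n) * pi * x)) / 2)"
  proof
    fix x
    have "cos (real m * pi * x) * cos (real n * pi * x) = (cos ((real m - real n) * pi * x) + cos (real (m + n) * pi * x)) / 2"
      by (simp add: cos_prod algebra_simps)
    also have "cos ((real m - real n) * pi * x) = cos (real d * pi * x)"
      using fun_cong[OF cos_int_diff[of m n], of x] by (simp add: d_def)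
    finally show "cos (real m * pi * x) * cos (real n * pi * x) = (cos (real d * pi * x) + cos (real (m + n) * pi * x)) / 2" .
  qed
  have ic: "(\<lambda>x. cos (real k * pi * x)) integrable_on {0..1}" for k :: nat
    by (intro integrable_continuous_interval continuous_intros)
  have "integral {0..1} (\<lambda>x. (cos (real d * pi * x) + cos (real (m + n) * pi * x)) / 2)
     = (integral {0..1} (\<lambda>x. cos (real d * pi * x)) + integral {0..1} (\<lambda>x. cos (real (m + n) * pi * x))) / 2"
    using integral_add[OF ic[of d] ic[of "m+n"]] by simp
  also have "\<dots> = ((if d = 0 then 1 else 0) + (if m + n = 0 then 1 else 0)) / 2"
    by (simp only: cos_int_nat)
  finally show ?thesis unfolding eq using d0 by auto
qed

lemma phi_ortho: "ip (phi m) (phi n) = (if m = n then 1 else 0)"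
proof -
  define cm where "cm = (if m = 0 then 1 else sqrt 2)"
  define cn where "cn = (if n = 0 then 1 else sqrt 2)"
  have pm: "phi k x = (if k = 0 then 1 else sqrt 2) * cos (real k * pi * x)" for k x
    by (simp add: phi_def)
  have "ip (phi m) (phi n) = integral {0..1} (\<lambda>x. (cm * cn) * (cos (real m * pi * x) * cos (real n * pi * x)))"
    unfolding ip_def pm cm_def cn_def by (simp add: algebra_simps)
  also have "\<dots> = cm * cn * integral {0..1} (\<lambda>x. cos (real m * pi * x) * cos (real n * pi * x))"
    by simp
  also have "\<dots> = (if m = n then 1 else 0)"
    unfolding int_cos_cos cm_def cn_def by auto
  finally show ?thesis .
qed

lemma ip_diff_right: "L2 f \<Longrightarrow> L2 g \<Longrightarrow> L2 h \<Longrightarrow> ip h (\<lambda>x. f x - g x) = ip h f - ip h g"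
  using ip_diff[of f g h] by (simp add: ip_comm)

lemma ip_add_right: "L2 f \<Longrightarrow> L2 g \<Longrightarrow> L2 h \<Longrightarrow> ip h (\<lambda>x. f x + g x) = ip h f + ip h g"
  using ip_add[of f g h] by (simp add: ip_comm)

lemma ip_expand_diff:
  assumes "L2 f" "L2 g"
  shows "ip (\<lambda>x. f x - g x) (\<lambda>x. f x - g x) = ip f f - 2 * ip f g + ip g g"
  using assms by (simp add: ip_diff ip_diff_right L2_diff ip_comm[of g f])

lemma ip_expand_add:
  assumes "L2 f" "L2 g"
  shows "ip (\<lambda>x. f x + g x) (\<lambda>x. f x + g x) = ip f f + 2 * ip f g + ip g g"
  using assms by (simp add: ip_add ip_add_right L2_add ip_comm[of g f])

lemma ip_add_le:
  assumes "L2 f" "L2 g"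
  shows "ip (\<lambda>x. f x + g x) (\<lambda>x. f x + g x) \<le> 2 * ip f f + 2 * ip g g"
proof -
  have "ip (\<lambda>x. f x - g x) (\<lambda>x. f x - g x) \<ge> 0" by (rule ip_self_nonneg)
  then show ?thesis using ip_expand_add[OF assms] ip_expand_diff[OF assms] by linarith
qed

lemma ip_diff_le:
  assumes "L2 f" "L2 g"
  shows "ip (\<lambda>x. f x - g x) (\<lambda>x. f x - g x) \<le> 2 * ip f f + 2 * ip g g"
proof -
  have "ip (\<lambda>x. f x + g x) (\<lambda>x. f x + g x) \<ge> 0" by (rule ip_self_nonneg)
  then show ?thesis using ip_expand_add[OF assms] ip_expand_diff[OF assms] by linarith
qed

lemma ip_tri_le:
  assumes "L2 f" "L2 g" "L2 h"
  shows "ip (\<lambda>x. f x - h x) (\<lambda>x. f x - h x) \<le> 2 * ip (\<lambda>x. f x - g x) (\<lambda>x. f x - g x) + 2 * ip (\<lambda>x. g x - h x) (\<lambda>x. g x - h x)"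
  using ip_add_le[of "\<lambda>x. f x - g x" "\<lambda>x. g x - h x"] assms by (simp add: L2_diff)

definition cpoly :: "(nat \<Rightarrow> real) \<Rightarrow> nat \<Rightarrow> real \<Rightarrow> real" where
  "cpoly \<alpha> M x = (\<Sum>n\<le>M. \<alpha> n * phi n x)"

lemma L2_cpoly: "L2 (cpoly \<alpha> M)"
  unfolding cpoly_def[abs_def] by (intro L2_sum L2_cmult L2_phi) auto

lemma cont_cpoly: "continuous_on A (cpoly \<alpha> M)"
  unfolding cpoly_def[abs_def] by (intro continuous_intros continuous_on_mult_left cont_phi)

lemma ip_cpoly_left: "L2 f \<Longrightarrow> ip (cpoly \<alpha> M) f = (\<Sum>n\<le>M. \<alpha> n * ip (phi n) f)"
  unfolding cpoly_def[abs_def]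
  by (subst ip_sum) (auto intro: L2_cmult L2_phi simp: ip_cmult)

lemma ip_cpoly_phi: "ip (cpoly \<alpha> M) (phi m) = (if m \<le> M then \<alpha> m else 0)"
  by (simp add: ip_cpoly_left L2_phi phi_ortho if_distrib[of "\<lambda>x. _ * x"] sum.delta cong: if_cong)

lemma ip_cpoly_cpoly: "ip (cpoly \<alpha> M) (cpoly \<alpha> M) = (\<Sum>n\<le>M. (\<alpha> n)^2)"
proof -
  have "ip (cpoly \<alpha> M) (cpoly \<alpha> M) = (\<Sum>n\<le>M. \<alpha> n * ip (phi n) (cpoly \<alpha> M))"
    by (rule ip_cpoly_left[OF L2_cpoly])
  also have "\<dots> = (\<Sum>n\<le>M. (\<alpha> n)^2)"
    by (intro sum.cong refl) (simp add: ip_comm[of "phi _"] ip_cpoly_phi power2_eq_square)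
  finally show ?thesis .
qed

definition coef :: "(real \<Rightarrow> real) \<Rightarrow> nat \<Rightarrow> real" where
  "coef f n = ip f (phi n)"

lemma ip_f_cpoly: "L2 f \<Longrightarrow> ip f (cpoly \<alpha> M) = (\<Sum>n\<le>M. \<alpha> n * coef f n)"
  by (simp add: ip_comm[of f] ip_cpoly_left coef_def)

lemma err_cpoly:
  assumes "L2 f"
  shows "ip (\<lambda>x. f x - cpoly \<alpha> M x) (\<lambda>x. f x - cpoly \<alpha> M x)
       = ip f f - (\<Sum>n\<le>M. (coef f n)^2) + (\<Sum>n\<le>M. (\<alpha> n - coef f n)^2)"
proof -
  have "ip (\<lambda>x. f x - cpoly \<alpha> M x) (\<lambda>x. f x - cpoly \<alpha> M x) = ip f f - 2 * (\<Sum>n\<le>M. \<alpha> n * coef f n) + (\<Sum>n\<le>M. (\<alpha> n)^2)"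
    using ip_expand_diff[OF assms L2_cpoly] by (simp add: ip_f_cpoly assms ip_cpoly_cpoly)
  also have "\<dots> = ip f f - (\<Sum>n\<le>M. (coef f n)^2) + (\<Sum>n\<le>M. (\<alpha> n - coef f n)^2)"
    by (simp add: power2_diff sum.distrib sum_subtractf sum_distrib_left algebra_simps)
  finally show ?thesis .
qed

lemma bessel: "L2 f \<Longrightarrow> (\<Sum>n\<le>M. (coef f n)^2) \<le> ip f f"
  using err_cpoly[of f "coef f" M] ip_self_nonneg[of "\<lambda>x. f x - cpoly (coef f) M x"] by simp

lemma err_lower: "L2 f \<Longrightarrow> ip f f - (\<Sum>n\<le>M. (coef f n)^2) \<le> ip (\<lambda>x. f x - cpoly \<alpha> M x) (\<lambda>x. f x - cpoly \<alpha> M x)"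
  using err_cpoly[of f \<alpha> M] by (simp add: sum_nonneg)

definition approx :: "(real \<Rightarrow> real) \<Rightarrow> bool" where
  "approx f \<longleftrightarrow> (\<forall>e>0. \<exists>M \<alpha>. ip (\<lambda>x. f x - cpoly \<alpha> M x) (\<lambda>x. f x - cpoly \<alpha> M x) < e)"

lemma parseval_of_approx:
  assumes f: "L2 f" and ap: "approx f"
  shows "(\<lambda>n. (coef f n)^2) sums ip f f"
proof -
  have inc: "incseq (\<lambda>M. \<Sum>n\<le>M. (coef f n)^2)"
    by (rule incseq_SucI) simp
  have "(\<lambda>M. \<Sum>n<Suc M. (coef f n)^2) \<longlonglongrightarrow> ip f f"
    unfolding lessThan_Suc_atMost
  proof (rule LIMSEQ_I)
    fix r :: real assume r: "r > 0"
    obtain M \<alpha> where M: "ip (\<lambda>x. f x - cpoly \<alpha> M x) (\<lambda>x. f x - cpoly \<alpha> M x) < r"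
      using ap r unfolding approx_def by blast
    show "\<exists>no. \<forall>n\<ge>no. norm ((\<Sum>k\<le>n. (coef f k)^2) - ip f f) < r"
    proof (intro exI allI impI)
      fix n assume "n \<ge> M"
      then have "(\<Sum>k\<le>M. (coef f k)^2) \<le> (\<Sum>k\<le>n. (coef f k)^2)"
        using inc by (simp add: incseq_def)
      moreover have "ip f f - (\<Sum>k\<le>M. (coef f k)^2) < r" using err_lower[OF f, of M \<alpha>] M by linarith
      moreover have "(\<Sum>k\<le>n. (coef f k)^2) \<le> ip f f" by (rule bessel[OF f])
      ultimately show "norm ((\<Sum>k\<le>n. (coef f k)^2) - ip f f) < r" by simp
    qed
  qed
  then show ?thesis unfolding sums_def
    using filterlim_sequentially_Suc[of "\<lambda>n. \<Sum>k<n. (coef f k)^2"] by simp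
qed

lemma approx_closed:
  assumes f: "L2 f" and h: "\<And>e. e > 0 \<Longrightarrow> \<exists>g. L2 g \<and> approx g \<and> ip (\<lambda>x. f x - g x) (\<lambda>x. f x - g x) < e"
  shows "approx f"
  unfolding approx_def
proof (intro allI impI)
  fix e :: real assume e: "e > 0"
  obtain g where g: "L2 g" "approx g" "ip (\<lambda>x. f x - g x) (\<lambda>x. f x - g x) < e/4"
    using h[of "e/4"] e by auto
  obtain M \<alpha> where M: "ip (\<lambda>x. g x - cpoly \<alpha> M x) (\<lambda>x. g x - cpoly \<alpha> M x) < e/4"
    using g(2) e unfolding approx_def by (meson divide_pos_pos zero_less_numeral)
  have "ip (\<lambda>x. f x - cpoly \<alpha> M x) (\<lambda>x. f x - cpoly \<alpha> M x) < e"
    using ip_tri_le[OF f g(1) L2_cpoly, of \<alpha> M] g(3) M by linarith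
  then show "\<exists>M \<alpha>. ip (\<lambda>x. f x - cpoly \<alpha> M x) (\<lambda>x. f x - cpoly \<alpha> M x) < e" by blast
qed

lemma cpoly_add:
  "cpoly \<alpha> M1 x + cpoly \<beta> M2 x = cpoly (\<lambda>n. (if n \<le> M1 then \<alpha> n else 0) + (if n \<le> M2 then \<beta> n else 0)) (max M1 M2) x"
proof -
  have *: "(\<Sum>n\<le>K. \<alpha> n * phi n x) = (\<Sum>n\<le>max K K'. (if n \<le> K then \<alpha> n else 0) * phi n x)" for K K' :: nat and \<alpha>
  proof -
    have "(\<Sum>n\<le>max K K'. (if n \<le> K then \<alpha> n else 0) * phi n x) = (\<Sum>n\<le>max K K'. (if n \<in> {..K} then \<alpha> n * phi n x else 0))"
      by (intro sum.cong refl) auto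
    also have "\<dots> = (\<Sum>n\<in>{..max K K'} \<inter> {..K}. \<alpha> n * phi n x)"
      by (simp only: sum.inter_restrict[symmetric] finite_atMost)
    also have "{..max K K'} \<inter> {..K} = {..K}" by auto
    finally show ?thesis by simp
  qed
  show ?thesis
    unfolding cpoly_def *[where K=M1 and K'=M2 and \<alpha>=\<alpha>] *[where K=M2 and K'=M1 and \<alpha>=\<beta>]
    by (simp add: max.commute sum.distrib distrib_right)
qed

lemma cpoly_cmult: "c * cpoly \<alpha> M x = cpoly (\<lambda>n. c * \<alpha> n) M x"
  by (simp add: cpoly_def sum_distrib_left mult.assoc)

lemma approx_add:
  assumes "L2 f" "L2 g" "approx f" "approx g"
  shows "approx (\<lambda>x. f x + g x)"
  unfolding approx_def
proof (intro allI impI)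
  fix e :: real assume e: "e > 0"
  obtain M1 \<alpha> where M1: "ip (\<lambda>x. f x - cpoly \<alpha> M1 x) (\<lambda>x. f x - cpoly \<alpha> M1 x) < e/4"
    using assms(3) e unfolding approx_def by (meson divide_pos_pos zero_less_numeral)
  obtain M2 \<beta> where M2: "ip (\<lambda>x. g x - cpoly \<beta> M2 x) (\<lambda>x. g x - cpoly \<beta> M2 x) < e/4"
    using assms(4) e unfolding approx_def by (meson divide_pos_pos zero_less_numeral)
  let ?\<gamma> = "\<lambda>n. (if n \<le> M1 then \<alpha> n else 0) + (if n \<le> M2 then \<beta> n else 0)"
  have eq: "(\<lambda>x. f x + g x - cpoly ?\<gamma> (max M1 M2) x) = (\<lambda>x. (f x - cpoly \<alpha> M1 x) + (g x - cpoly \<beta> M2 x))"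
    by (rule ext) (simp add: cpoly_add[symmetric] algebra_simps)
  have "ip (\<lambda>x. f x + g x - cpoly ?\<gamma> (max M1 M2) x) (\<lambda>x. f x + g x - cpoly ?\<gamma> (max M1 M2) x) < e"
    unfolding eq using ip_add_le[of "\<lambda>x. f x - cpoly \<alpha> M1 x" "\<lambda>x. g x - cpoly \<beta> M2 x"] M1 M2 assms
    by (simp add: L2_diff L2_cpoly)
  then show "\<exists>M \<gamma>. ip (\<lambda>x. f x + g x - cpoly \<gamma> M x) (\<lambda>x. f x + g x - cpoly \<gamma> M x) < e" by blast
qed

lemma approx_cmult:
  assumes "approx f"
  shows "approx (\<lambda>x. c * f x)"
  unfolding approx_def
proof (intro allI impI)
  fix e :: real assume e: "e > 0"
  have c1: "c^2 + 1 > 0" by (smt (verit) zero_le_power2)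
  have e': "e / (c^2 + 1) > 0" using e c1 by (rule divide_pos_pos)
  obtain M \<alpha> where M: "ip (\<lambda>x. f x - cpoly \<alpha> M x) (\<lambda>x. f x - cpoly \<alpha> M x) < e / (c^2 + 1)"
    using assms e' unfolding approx_def by blast
  have eq: "(\<lambda>x. c * f x - cpoly (\<lambda>n. c * \<alpha> n) M x) = (\<lambda>x. c * (f x - cpoly \<alpha> M x))"
    by (simp add: cpoly_cmult[symmetric] algebra_simps)
  have "ip (\<lambda>x. c * f x - cpoly (\<lambda>n. c * \<alpha> n) M x) (\<lambda>x. c * f x - cpoly (\<lambda>n. c * \<alpha> n) M x)
      = c^2 * ip (\<lambda>x. f x - cpoly \<alpha> M x) (\<lambda>x. f x - cpoly \<alpha> M x)"
    unfolding eq by (simp add: ip_cmult ip_comm[of _ "\<lambda>x. c * _ x"] power2_eq_square)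
  also have "\<dots> \<le> c^2 * (e / (c^2+1))" using M by (intro mult_left_mono) auto
  also have "\<dots> < e" using e c1 by (simp add: field_simps)
  finally show "\<exists>M \<gamma>. ip (\<lambda>x. c * f x - cpoly \<gamma> M x) (\<lambda>x. c * f x - cpoly \<gamma> M x) < e" by blast
qed

lemma approx_sum:
  assumes "finite A" "\<And>i. i \<in> A \<Longrightarrow> L2 (f i) \<and> approx (f i)"
  shows "approx (\<lambda>x. \<Sum>i\<in>A. f i x)"
  using assms
proof (induction A rule: finite_induct)
  case empty
  have "approx (\<lambda>x. 0)"
    unfolding approx_def
  proof (intro allI impI)
    fix e :: real assume "e > 0"
    then have "ip (\<lambda>x. 0 - cpoly (\<lambda>n. 0) 0 x) (\<lambda>x. 0 - cpoly (\<lambda>n. 0) 0 x) < e"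
      by (simp add: cpoly_def ip_def)
    then show "\<exists>M \<alpha>. ip (\<lambda>x. 0 - cpoly \<alpha> M x) (\<lambda>x. 0 - cpoly \<alpha> M x) < e" by blast
  qed
  then show ?case by simp
next
  case (insert a A)
  then show ?case by (simp add: approx_add L2_sum)
qed

definition cosspan :: "(real \<Rightarrow> real) \<Rightarrow> bool" where
  "cosspan h \<longleftrightarrow> (\<exists>M \<beta>. \<forall>t. h t = (\<Sum>k\<le>M. \<beta> k * cos (real k * t)))"

lemma cs_cos: "cosspan (\<lambda>t. cos (real k * t))"
  unfolding cosspan_def
  by (rule exI[of _ k], rule exI[of _ "\<lambda>j. if j = k then 1 else 0"])
     (simp add: if_distrib[of "\<lambda>y. y * _"] sum.delta cong: if_cong)

lemma cs_const: "cosspan (\<lambda>t. c)"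
  unfolding cosspan_def
  by (rule exI[of _ 0], rule exI[of _ "\<lambda>j. c"]) simp

lemma cs_cmult: "cosspan f \<Longrightarrow> cosspan (\<lambda>t. c * f t)"
  unfolding cosspan_def
  by (auto simp: sum_distrib_left mult.assoc intro!: exI[of _ "\<lambda>j. c * _ j"])

lemma pad_sum:
  "(\<Sum>k\<le>K. \<beta> k * cos (real k * t)) = (\<Sum>k\<le>max K K'. (if k \<le> K then \<beta> k else 0) * cos (real k * t))"
proof -
  have "(\<Sum>k\<le>max K K'. (if k \<le> K then \<beta> k else 0) * cos (real k * t)) = (\<Sum>k\<le>max K K'. (if k \<in> {..K} then \<beta> k * cos (real k * t) else 0))"
    by (intro sum.cong refl) auto
  also have "\<dots> = (\<Sum>k\<in>{..max K K'} \<inter> {..K}. \<beta> k * cos (real k * t))"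
    by (simp only: sum.inter_restrict[symmetric] finite_atMost)
  also have "{..max K K'} \<inter> {..K} = {..K}" by auto
  finally show ?thesis by simp
qed

lemma cs_add: "cosspan f \<Longrightarrow> cosspan g \<Longrightarrow> cosspan (\<lambda>t. f t + g t)"
proof -
  assume "cosspan f" "cosspan g"
  then obtain K1 \<beta> K2 \<gamma> where f: "\<And>t. f t = (\<Sum>k\<le>K1. \<beta> k * cos (real k * t))"
    and g: "\<And>t. g t = (\<Sum>k\<le>K2. \<gamma> k * cos (real k * t))" unfolding cosspan_def by blast
  have "f t + g t = (\<Sum>k\<le>max K1 K2. ((if k \<le> K1 then \<beta> k else 0) + (if k \<le> K2 then \<gamma> k else 0)) * cos (real k * t))" for t
    unfolding f g pad_sum[where K=K1 and K'=K2 and \<beta>=\<beta>] pad_sum[where K=K2 and K'=K1 and \<beta>=\<gamma>]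
    by (simp add: max.commute sum.distrib distrib_right)
  then show ?thesis unfolding cosspan_def
    by (intro exI[of _ "max K1 K2"] exI[of _ "\<lambda>k. (if k \<le> K1 then \<beta> k else 0) + (if k \<le> K2 then \<gamma> k else 0)"]) blast
qed

lemma cs_sum: "finite A \<Longrightarrow> (\<And>i. i \<in> A \<Longrightarrow> cosspan (f i)) \<Longrightarrow> cosspan (\<lambda>t. \<Sum>i\<in>A. f i t)"
  by (induction A rule: finite_induct) (auto simp: cs_const cs_add)

lemma cos_nat_diff: "cos ((real j - real k) * t) = cos (real (if k \<le> j then j - k else k - j) * t)"
proof (cases "k \<le> j")
  case True then show ?thesis by (simp add: of_nat_diff)
next
  case False
  then have "(real j - real k) * t = - (real (k - j) * t)" by (simp add: of_nat_diff algebra_simps)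
  then show ?thesis using False by (simp only: cos_minus) simp
qed

lemma cs_cos_cos: "cosspan (\<lambda>t. cos (real j * t) * cos (real k * t))"
proof -
  have "cos (real j * t) * cos (real k * t) = (1/2) * cos (real (if k \<le> j then j - k else k - j) * t) + (1/2) * cos (real (j + k) * t)" for t
    using cos_nat_diff[of j k t] by (simp add: cos_prod algebra_simps)
  then show ?thesis using cs_add[OF cs_cmult[OF cs_cos] cs_cmult[OF cs_cos]] by presburger
qed

lemma cs_mult: "cosspan f \<Longrightarrow> cosspan g \<Longrightarrow> cosspan (\<lambda>t. f t * g t)"
proof -
  assume "cosspan f" "cosspan g"
  then obtain K1 \<beta> K2 \<gamma> where f: "\<And>t. f t = (\<Sum>k\<le>K1. \<beta> k * cos (real k * t))"
    and g: "\<And>t. g t = (\<Sum>k\<le>K2. \<gamma> k * cos (real k * t))" unfolding cosspan_def by blast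
  have eq: "f t * g t = (\<Sum>j\<le>K1. \<Sum>k\<le>K2. (\<beta> j * \<gamma> k) * (cos (real j * t) * cos (real k * t)))" for t
    unfolding f g sum_product by (simp add: algebra_simps)
  show ?thesis unfolding eq
    by (intro cs_sum cs_cmult cs_cos_cos) auto
qed

lemma bounded_linear_real: "bounded_linear (f :: real \<Rightarrow> real) \<Longrightarrow> f x = f 1 * x"
  using linear_scale_real[OF bounded_linear.linear, of f x 1] by simp

lemma cs_poly: "real_polynomial_function q \<Longrightarrow> cosspan (\<lambda>t. q (cos t))"
proof (induction rule: real_polynomial_function.induct)
  case (linear f)
  have "cosspan (\<lambda>t. f 1 * cos (real 1 * t))" by (rule cs_cmult[OF cs_cos])
  then show ?case using bounded_linear_real[OF linear] by (metis (no_types, lifting) ext mult_1 of_nat_1)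
next
  case (const c) then show ?case by (rule cs_const)
next
  case (add f g) show ?case using add.IH by (rule cs_add)
next
  case (mult f g) show ?case using mult.IH by (rule cs_mult)
qed

lemma unif_approx:
  assumes g: "continuous_on {0..1} g" and e: "e > 0"
  shows "\<exists>M \<alpha>. \<forall>x\<in>{0..1}. \<bar>g x - cpoly \<alpha> M x\<bar> < e"
proof -
  define h where "h y = g (arccos y / pi)" for y
  have "continuous_on {-1..1} h"
    unfolding h_def
  proof (rule continuous_on_compose2[OF g])
    show "continuous_on {-1..1} (\<lambda>y. arccos y / pi)"
      by (intro continuous_intros continuous_on_arccos') auto
    show "(\<lambda>y. arccos y / pi) ` {-1..1} \<subseteq> {0..1}"
      using arccos_bounded by (auto simp: field_simps)
  qed
  then obtain q where q: "real_polynomial_function q" "\<And>y. y \<in> {-1..1} \<Longrightarrow> \<bar>h y - q y\<bar> < e"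
    using Stone_Weierstrass_real_polynomial_function[of "{-1..1::real}" h e] e by auto
  obtain M \<beta> where \<beta>: "\<And>t. q (cos t) = (\<Sum>k\<le>M. \<beta> k * cos (real k * t))"
    using cs_poly[OF q(1)] unfolding cosspan_def by blast
  define \<alpha> where "\<alpha> k = (if k = 0 then \<beta> k else \<beta> k / sqrt 2)" for k
  have cp: "cpoly \<alpha> M x = q (cos (pi * x))" for x
    unfolding cpoly_def \<beta> by (intro sum.cong refl) (auto simp: \<alpha>_def phi_def algebra_simps)
  have "\<bar>g x - cpoly \<alpha> M x\<bar> < e" if x: "x \<in> {0..1}" for x
  proof -
    have "arccos (cos (pi * x)) = pi * x" using x by (intro arccos_cos) auto
    then have "h (cos (pi * x)) = g x" by (simp add: h_def)
    then show ?thesis using q(2)[of "cos (pi * x)"] by (simp add: cp)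
  qed
  then show ?thesis by blast
qed

lemma approx_cont:
  assumes g: "continuous_on {0..1} g"
  shows "approx g"
  unfolding approx_def
proof (intro allI impI)
  fix \<epsilon> :: real assume \<epsilon>: "\<epsilon> > 0"
  have "sqrt \<epsilon> / 2 > 0" using \<epsilon> by simp
  then obtain M \<alpha> where M0: "\<forall>x\<in>{0..1}. \<bar>g x - cpoly \<alpha> M x\<bar> < sqrt \<epsilon> / 2"
    using unif_approx[OF g, of "sqrt \<epsilon> / 2"] by blast
  have M: "\<bar>g x - cpoly \<alpha> M x\<bar> < sqrt \<epsilon> / 2" if "x\<in>{0..1}" for x using M0 that by blast
  have "ip (\<lambda>x. g x - cpoly \<alpha> M x) (\<lambda>x. g x - cpoly \<alpha> M x) \<le> integral {0..1::real} (\<lambda>x. (sqrt \<epsilon> / 2)^2)"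
    unfolding ip_def
  proof (rule Henstock_Kurzweil_Integration.integral_le)
    show "(\<lambda>x. (g x - cpoly \<alpha> M x) * (g x - cpoly \<alpha> M x)) integrable_on {0..1}"
      by (intro integrable_continuous_interval continuous_intros g cont_cpoly)
    fix x :: real assume "x \<in> {0..1}"
    then have "\<bar>g x - cpoly \<alpha> M x\<bar> \<le> sqrt \<epsilon> / 2" using M[of x] by simp
    then have "\<bar>g x - cpoly \<alpha> M x\<bar>^2 \<le> (sqrt \<epsilon> / 2)^2" by (intro power_mono) auto
    then show "(g x - cpoly \<alpha> M x) * (g x - cpoly \<alpha> M x) \<le> (sqrt \<epsilon> / 2)^2" by (simp add: power2_eq_square)
  qed (rule integrable_const_ivl)
  also have "\<dots> = \<epsilon> / 4" using \<epsilon> by (simp add: power_divide)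
  also have "\<dots> < \<epsilon>" using \<epsilon> by simp
  finally show "\<exists>M \<alpha>. ip (\<lambda>x. g x - cpoly \<alpha> M x) (\<lambda>x. g x - cpoly \<alpha> M x) < \<epsilon>" by blast
qed

lemma approx_lim:
  assumes f: "L2 f" and g: "\<And>k. L2 (g k) \<and> approx (g k)"
    and lim: "(\<lambda>k. ip (\<lambda>x. f x - g k x) (\<lambda>x. f x - g k x)) \<longlonglongrightarrow> 0"
  shows "approx f"
proof (rule approx_closed[OF f])
  fix e :: real assume e: "e > 0"
  obtain k where "\<bar>ip (\<lambda>x. f x - g k x) (\<lambda>x. f x - g k x) - 0\<bar> < e"
    using LIMSEQ_D[OF lim e] by auto
  then show "\<exists>g. L2 g \<and> approx g \<and> ip (\<lambda>x. f x - g x) (\<lambda>x. f x - g x) < e"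
    using g[of k] by auto
qed

lemma L2_bounded:
  assumes "f \<in> borel_measurable (lebesgue_on {0..1})" "\<And>x. x \<in> {0..1} \<Longrightarrow> \<bar>f x\<bar> \<le> B"
  shows "L2 f"
  unfolding L2_iff
proof (intro conjI assms)
  show "(\<lambda>x. (f x)^2) integrable_on {0..1}"
  proof (rule measurable_bounded_by_integrable_imp_integrable_real)
    show "(\<lambda>x. (f x)^2) \<in> borel_measurable (lebesgue_on {0..1})" using assms(1) by measurable
    show "(\<lambda>x. B^2) integrable_on {0..1::real}" by (rule integrable_const_ivl)
    fix x :: real assume "x \<in> {0..1}"
    then have "\<bar>f x\<bar> \<le> B" by (rule assms(2))
    then show "\<bar>(f x)^2\<bar> \<le> B^2" using power_mono[of "\<bar>f x\<bar>" B 2] by simp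
  qed simp
qed

lemma L2_indicator: "S \<in> sets lebesgue \<Longrightarrow> L2 (indicator S :: real \<Rightarrow> real)"
proof (rule L2_bounded[where B=1])
  assume "S \<in> sets lebesgue"
  then show "(indicator S :: real \<Rightarrow> real) \<in> borel_measurable (lebesgue_on {0..1})"
    by (intro measurable_restrict_space1 borel_measurable_indicator)
qed (simp add: indicator_def)

lemma approx_closed_ind:
  assumes F: "closed F"
  shows "approx (indicator F :: real \<Rightarrow> real)"
proof (cases "F = {}")
  case True
  then have "(indicator F :: real \<Rightarrow> real) = (\<lambda>x. 0)" by (auto simp: fun_eq_iff)
  then show ?thesis using approx_cont[of "\<lambda>x. 0"] by simp
next
  case ne: False
  define g where "g k x = max 0 (1 - real k * infdist x F)" for k x
  have Fl: "F \<in> sets lebesgue" using F by (simp add: borel_closed)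
  have gc: "continuous_on UNIV (g k)" for k
    unfolding g_def by (intro continuous_intros)
  have g01: "0 \<le> g k x \<and> g k x \<le> 1" for k x
    unfolding g_def using infdist_nonneg[of x F] by auto
  have L2g: "L2 (g k) \<and> approx (g k)" for k
    using gc by (auto intro: L2_cont approx_cont continuous_on_subset)
  show ?thesis
  proof (rule approx_lim[OF L2_indicator[OF Fl] L2g])
    let ?h = "\<lambda>k x. (indicator F x - g k x) * (indicator F x - g k x) :: real"
    have "(\<lambda>k. integral {0..1} (?h k)) \<longlonglongrightarrow> integral {0..1::real} (\<lambda>x. 0)"
    proof (rule dominated_convergence(2))
      show "?h k integrable_on {0..1}" for k
        using L2_mult_integrable[OF L2_diff[OF L2_indicator[OF Fl] conjunct1[OF L2g]] L2_diff[OF L2_indicator[OF Fl] conjunct1[OF L2g]]] .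
      show "(\<lambda>x. 1) integrable_on {0..1::real}" by (rule integrable_const_ivl)
      show "norm (?h k x) \<le> 1" for k x
        using g01[of k x] by (auto simp: indicator_def abs_mult intro: mult_le_one)
      show "(\<lambda>k. ?h k x) \<longlonglongrightarrow> 0" for x
      proof (cases "x \<in> F")
        case True
        then show ?thesis by (simp add: g_def)
      next
        case False
        then have d: "infdist x F > 0" using infdist_pos_not_in_closed[OF F ne] by simp
        obtain K :: nat where K: "real K > 1 / infdist x F" using reals_Archimedean2 by blast
        have "eventually (\<lambda>k. ?h k x = 0) sequentially"
          unfolding eventually_sequentially
        proof (intro exI allI impI)
          fix k assume "k \<ge> K"
          then have "real k * infdist x F \<ge> real K * infdist x F" using d by (intro mult_right_mono) auto
          moreover have "real K * infdist x F > 1" using K d by (simp add: field_simps)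
          ultimately show "?h k x = 0" using False by (simp add: g_def)
        qed
        then show ?thesis by (simp add: tendsto_eventually)
      qed
    qed
    then show "(\<lambda>k. ip (\<lambda>x. indicator F x - g k x) (\<lambda>x. indicator F x - g k x)) \<longlonglongrightarrow> 0"
      by (simp add: ip_def)
  qed
qed

lemma approx_ind:
  assumes S: "S \<in> sets lebesgue"
  shows "approx (indicator S :: real \<Rightarrow> real)"
proof (rule approx_closed[OF L2_indicator[OF S]])
  fix e :: real assume e: "e > 0"
  have SI: "S \<inter> {0..1} \<in> sets lebesgue" using S by auto
  obtain F where F: "closed F" "F \<subseteq> S \<inter> {0..1}" "S \<inter> {0..1} - F \<in> lmeasurable"
    "emeasure lebesgue (S \<inter> {0..1} - F) < ennreal e"
    using sets_lebesgue_inner_closed[OF SI e] by blast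
  have Fl: "F \<in> sets lebesgue" using F by (simp add: borel_closed)
  have eq: "(\<lambda>x. (indicator S x - indicator F x) * (indicator S x - indicator F x)) = (indicator (S - F) :: real \<Rightarrow> real)"
  proof (rule ext)
    fix x
    show "(indicator S x - indicator F x) * (indicator S x - indicator F x) = (indicator (S - F) x :: real)"
      using F(2) by (cases "x \<in> S"; cases "x \<in> F") auto
  qed
  have "ip (\<lambda>x. indicator S x - indicator F x) (\<lambda>x. indicator S x - indicator F x) = measure lebesgue ((S - F) \<inter> {0..1})"
    unfolding ip_def eq
  proof (rule integral_indicator)
    have "(S - F) \<inter> {0..1} = S \<inter> {0..1} - F" by auto
    then show "(S - F) \<inter> {0..1} \<in> lmeasurable" using F(3) by simp
  qed
  also have "(S - F) \<inter> {0..1} = S \<inter> {0..1} - F" by auto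
  also have "measure lebesgue (S \<inter> {0..1} - F) < e"
  proof -
    have "emeasure lebesgue (S \<inter> {0..1} - F) = ennreal (measure lebesgue (S \<inter> {0..1} - F))"
      using F(3) by (rule emeasure_eq_measure2)
    then have "ennreal (measure lebesgue (S \<inter> {0..1} - F)) < ennreal e" using F(4) by simp
    then show ?thesis using e by (subst (asm) ennreal_less_iff) auto
  qed
  finally show "\<exists>g. L2 g \<and> approx g \<and> ip (\<lambda>x. indicator S x - g x) (\<lambda>x. indicator S x - g x) < e"
    using L2_indicator[OF Fl] approx_closed_ind[OF F(1)] by blast
qed

lemma sum_ind_card: "finite A \<Longrightarrow> (\<Sum>i\<in>A. (if P i then 1 else 0) :: real) = real (card {i\<in>A. P i})"
  by (simp add: sum.If_cases Int_def)

lemma count_bound: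
  fixes y :: real and k :: nat
  assumes "0 \<le> y" "y \<le> real k"
  shows "y - 1 \<le> real (card {i\<in>{1..k}. real i < y}) \<and> real (card {i\<in>{1..k}. real i < y}) \<le> y"
proof -
  have c0: "\<lceil>y\<rceil> \<ge> 0" using assms by simp
  have ck: "\<lceil>y\<rceil> \<le> int k" using assms by (simp add: ceiling_le_iff)
  have iff: "real i < y \<longleftrightarrow> i < nat \<lceil>y\<rceil>" for i :: nat
  proof -
    have "real i < y \<longleftrightarrow> int i < \<lceil>y\<rceil>" using less_ceiling_iff[of "int i" y] by simp
    also have "\<dots> \<longleftrightarrow> i < nat \<lceil>y\<rceil>" by (simp add: zless_nat_eq_int_zless)
    finally show ?thesis .
  qed
  have "{i\<in>{1..k}. real i < y} = {1..<nat \<lceil>y\<rceil>}"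
    using ck by (auto simp: iff)
  then have card: "card {i\<in>{1..k}. real i < y} = nat \<lceil>y\<rceil> - 1" by simp
  show ?thesis
  proof (cases "\<lceil>y\<rceil> = 0")
    case True
    then have "y \<le> 0" using le_of_int_ceiling[of y] by simp
    then show ?thesis using card True assms by simp
  next
    case False
    then have "nat \<lceil>y\<rceil> \<ge> 1" using c0 by linarith
    then have "real (nat \<lceil>y\<rceil> - 1) = real (nat \<lceil>y\<rceil>) - 1" by (simp add: of_nat_diff)
    also have "real (nat \<lceil>y\<rceil>) = real_of_int \<lceil>y\<rceil>" using c0 by simp
    finally have "real (nat \<lceil>y\<rceil> - 1) = real_of_int \<lceil>y\<rceil> - 1" .
    moreover have "real_of_int \<lceil>y\<rceil> - 1 < y" using ceiling_correct[of y] by linarith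
    moreover have "y \<le> real_of_int \<lceil>y\<rceil>" by (rule le_of_int_ceiling)
    ultimately show ?thesis using card by simp
  qed
qed

lemma approx_bounded:
  assumes fm: "f \<in> borel_measurable (lebesgue_on {0..1})" and fb: "\<And>x. x \<in> {0..1} \<Longrightarrow> \<bar>f x\<bar> \<le> B0"
  shows "approx f"
proof -
  define B where "B = \<bar>B0\<bar> + 1"
  have B: "B > 0" by (simp add: B_def)
  have fb': "\<bar>f x\<bar> \<le> B" if "x \<in> {0..1}" for x using fb[OF that] by (simp add: B_def)
  have L2f: "L2 f" by (rule L2_bounded[OF fm fb])
  define S where "S k i = {x \<in> {0..1}. real i < (f x + B) * real k / (2 * B)}" for k i :: nat
  have Sl: "S k i \<in> sets lebesgue" for k i
  proof -
    have "{x \<in> space (lebesgue_on {0..1}). real i < (f x + B) * real k / (2 * B)} \<in> sets (lebesgue_on {0..1})"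
      using fm by measurable
    then show ?thesis by (simp add: S_def sets_restrict_space_iff)
  qed
  define s where "s k x = - B + (2 * B / real k) * (\<Sum>i\<in>{1..k}. indicator (S k i) x)" for k :: nat and x
  have L2s: "L2 (s k) \<and> approx (s k)" for k
  proof
    show "L2 (s k)" unfolding s_def[abs_def]
      by (intro L2_add L2_cmult L2_sum L2_indicator Sl) (auto intro: L2_cont)
    have a1: "approx (\<lambda>x. - B)" by (rule approx_cont) simp
    have a2: "approx (\<lambda>x. (2 * B / real k) * (\<Sum>i\<in>{1..k}. indicator (S k i) x))"
      by (intro approx_cmult approx_sum) (auto intro: L2_indicator approx_ind Sl)
    have l1: "L2 (\<lambda>x. - B)" by (rule L2_cont) simp
    have l2: "L2 (\<lambda>x. (2 * B / real k) * (\<Sum>i\<in>{1..k}. indicator (S k i) x))"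
      by (intro L2_cmult L2_sum L2_indicator Sl) auto
    show "approx (s k)" unfolding s_def[abs_def]
      by (rule approx_add[OF l1 l2 a1 a2])
  qed
  have err: "\<bar>f x - s k x\<bar> \<le> 2 * B / real k" if x: "x \<in> {0..1}" and k: "k \<ge> 1" for x k
  proof -
    define y where "y = (f x + B) * real k / (2 * B)"
    have y0: "0 \<le> y" using fb'[OF x] B by (simp add: y_def)
    have yk: "y \<le> real k"
    proof -
      have "f x + B \<le> 2 * B" using fb'[OF x] by simp
      then have "(f x + B) * real k \<le> (2 * B) * real k" by (intro mult_right_mono) auto
      then show ?thesis using B by (simp add: y_def field_simps)
    qed
    have "(\<Sum>i\<in>{1..k}. indicator (S k i) x :: real) = (\<Sum>i\<in>{1..k}. (if real i < y then 1 else 0))"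
      using x by (intro sum.cong refl) (simp add: S_def y_def indicator_def)
    also have "\<dots> = real (card {i\<in>{1..k}. real i < y})" by (simp add: sum_ind_card)
    finally have sum: "(\<Sum>i\<in>{1..k}. indicator (S k i) x :: real) = real (card {i\<in>{1..k}. real i < y})" .
    have cb: "y - 1 \<le> real (card {i\<in>{1..k}. real i < y}) \<and> real (card {i\<in>{1..k}. real i < y}) \<le> y"
      by (rule count_bound[OF y0 yk])
    have fy: "f x = - B + (2 * B / real k) * y" using k B by (simp add: y_def field_simps)
    have "s k x = - B + (2 * B / real k) * real (card {i\<in>{1..k}. real i < y})"
      unfolding s_def sum by (rule refl)
    then have "f x - s k x = (2 * B / real k) * (y - real (card {i\<in>{1..k}. real i < y}))"
      using fy by (simp add: algebra_simps)
    moreover have "0 \<le> 2 * B / real k" using B by simp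
    moreover have "0 \<le> y - real (card {i\<in>{1..k}. real i < y})" "y - real (card {i\<in>{1..k}. real i < y}) \<le> 1"
      using cb by linarith+
    ultimately show ?thesis
      by (metis abs_of_nonneg mult_left_le mult_nonneg_nonneg)
  qed
  show ?thesis
  proof (rule approx_closed[OF L2f])
    fix e :: real assume e: "e > 0"
    obtain k :: nat where k: "real k > 2 * B / sqrt e" using reals_Archimedean2 by blast
    have "2 * B / sqrt e > 0" using B e by simp
    then have k1: "k \<ge> 1" using k by (cases k) auto
    have kpos: "real k > 0" using k1 by simp
    have "ip (\<lambda>x. f x - s k x) (\<lambda>x. f x - s k x) \<le> integral {0..1::real} (\<lambda>x. (2 * B / real k)^2)"
      unfolding ip_def
    proof (rule Henstock_Kurzweil_Integration.integral_le)
      show "(\<lambda>x. (f x - s k x) * (f x - s k x)) integrable_on {0..1}"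
        using L2_mult_integrable[OF L2_diff[OF L2f conjunct1[OF L2s]] L2_diff[OF L2f conjunct1[OF L2s]]] .
      fix x :: real assume "x \<in> {0..1}"
      then have "\<bar>f x - s k x\<bar> \<le> 2 * B / real k" using err k1 by blast
      then have "\<bar>f x - s k x\<bar>^2 \<le> (2 * B / real k)^2" by (intro power_mono) auto
      then show "(f x - s k x) * (f x - s k x) \<le> (2 * B / real k)^2" by (simp add: power2_eq_square)
    qed (rule integrable_const_ivl)
    also have "\<dots> = (2 * B / real k)^2" by simp
    also have "\<dots> < (sqrt e)^2"
    proof (rule power_strict_mono)
      show "2 * B / real k < sqrt e" using k kpos e by (simp add: field_simps)
    qed (use B in auto)
    also have "\<dots> = e" using e by simp
    finally show "\<exists>g. L2 g \<and> approx g \<and> ip (\<lambda>x. f x - g x) (\<lambda>x. f x - g x) < e"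
      using L2s[of k] by blast
  qed
qed

lemma approx_L2:
  assumes f: "L2 f"
  shows "approx f"
proof -
  define g where "g k x = max (- real k) (min (real k) (f x))" for k :: nat and x
  have fm: "f \<in> borel_measurable (lebesgue_on {0..1})" using f by (rule L2_meas)
  have gm: "g k \<in> borel_measurable (lebesgue_on {0..1})" for k
    unfolding g_def using fm by measurable
  have gb: "\<bar>g k x\<bar> \<le> real k" for k x unfolding g_def by auto
  have L2g: "L2 (g k) \<and> approx (g k)" for k
    using L2_bounded[OF gm gb] approx_bounded[OF gm gb] by blast
  show ?thesis
  proof (rule approx_lim[OF f L2g])
    let ?h = "\<lambda>k x. (f x - g k x) * (f x - g k x)"
    have "(\<lambda>k. integral {0..1} (?h k)) \<longlonglongrightarrow> integral {0..1::real} (\<lambda>x. 0)"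
    proof (rule dominated_convergence(2))
      show "?h k integrable_on {0..1}" for k
        using L2_mult_integrable[OF L2_diff[OF f conjunct1[OF L2g]] L2_diff[OF f conjunct1[OF L2g]]] .
      show "(\<lambda>x. (f x)^2) integrable_on {0..1}" using f by (rule L2_sq)
      show "norm (?h k x) \<le> (f x)^2" for k x
      proof -
        have "\<bar>f x - g k x\<bar> \<le> \<bar>f x\<bar>" unfolding g_def by auto
        then have "\<bar>f x - g k x\<bar>^2 \<le> \<bar>f x\<bar>^2" by (intro power_mono) auto
        then show ?thesis by (simp add: power2_eq_square abs_mult)
      qed
      show "(\<lambda>k. ?h k x) \<longlonglongrightarrow> 0" for x
      proof -
        obtain K :: nat where K: "real K \<ge> \<bar>f x\<bar>" using real_arch_simple by blast
        have "eventually (\<lambda>k. ?h k x = 0) sequentially"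
          unfolding eventually_sequentially
        proof (intro exI allI impI)
          fix k assume "k \<ge> K"
          then have "real K \<le> real k" by simp
          then have "real k \<ge> \<bar>f x\<bar>" using K by linarith
          then show "?h k x = 0" by (simp add: g_def)
        qed
        then show ?thesis by (simp add: tendsto_eventually)
      qed
    qed
    then show "(\<lambda>k. ip (\<lambda>x. f x - g k x) (\<lambda>x. f x - g k x)) \<longlonglongrightarrow> 0"
      by (simp add: ip_def)
  qed
qed

theorem parseval:
  assumes "L2 f"
  shows "(\<lambda>n. (coef f n)^2) sums ip f f"
  using parseval_of_approx[OF assms approx_L2[OF assms]] .

lemma at_halfline: "x \<ge> 0 \<Longrightarrow> at x within {0..} = at x within {0..x+1::real}"
  by (rule at_within_nhd[where S="{..<x+1}"]) auto

lemma cont_halfline: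
  fixes F :: "real \<Rightarrow> real"
  assumes "\<And>T. T \<ge> 0 \<Longrightarrow> continuous_on {0..T} F"
  shows "continuous_on {0..} F"
  unfolding continuous_on_def
proof
  fix x :: real assume "x \<in> {0..}"
  then have x: "x \<ge> 0" by simp
  have "continuous_on {0..x+1} F" using assms x by simp
  then have "(F \<longlongrightarrow> F x) (at x within {0..x+1})" using x by (simp add: continuous_on_def)
  then show "(F \<longlongrightarrow> F x) (at x within {0..})" using at_halfline[OF x] by simp
qed

lemma series_cont:
  fixes f :: "nat \<Rightarrow> real \<Rightarrow> real"
  assumes "\<And>n. continuous_on S (f n)" "\<And>n t. t \<in> S \<Longrightarrow> \<bar>f n t\<bar> \<le> M n" "summable M"
  shows "continuous_on S (\<lambda>t. \<Sum>n. f n t)"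
proof (rule uniform_limit_theorem)
  show "uniform_limit S (\<lambda>n t. \<Sum>i<n. f i t) (\<lambda>t. \<Sum>n. f n t) sequentially"
    using assms(2,3) by (intro Weierstrass_m_test) auto
  show "\<forall>\<^sub>F n in sequentially. continuous_on S (\<lambda>t. \<Sum>i<n. f i t)"
    using assms(1) by (intro always_eventually allI continuous_on_sum) auto
qed simp

lemma summable_bound:
  fixes f :: "nat \<Rightarrow> real"
  shows "(\<And>n. \<bar>f n\<bar> \<le> M n) \<Longrightarrow> summable M \<Longrightarrow> summable f"
  by (rule summable_comparison_test[of f M]) auto

lemma sq_ge: "(real m * pi)^2 \<ge> real m"
proof -
  have "real m \<le> real m * real m" by (cases m) auto
  also have "\<dots> = (real m)^2 * 1" by (simp add: power2_eq_square)
  also have "\<dots> \<le> (real m)^2 * pi^2"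
    using pi_gt3 by (intro mult_left_mono) (use pi_ge_two in \<open>auto simp: power2_eq_square intro: order_trans[OF _ mult_mono[of 1 pi 1 pi]]\<close>)
  finally show ?thesis by (simp add: power_mult_distrib)
qed

lemma summable_exp_sq:
  assumes s: "s > 0"
  shows "summable (\<lambda>m. exp ((c - (real m * pi)^2) * s))"
proof (rule summable_bound)
  show "\<bar>exp ((c - (real m * pi)^2) * s)\<bar> \<le> exp (c * s) * exp (- s) ^ m" for m
  proof -
    have "(c - (real m * pi)^2) * s \<le> (c - real m) * s"
      using sq_ge[of m] s by (intro mult_right_mono) auto
    then have "exp ((c - (real m * pi)^2) * s) \<le> exp ((c - real m) * s)" by simp
    also have "\<dots> = exp (c * s) * exp (- s) ^ m"
      by (simp add: exp_of_nat_mult[symmetric] exp_add[symmetric] algebra_simps)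
    finally show ?thesis by simp
  qed
  show "summable (\<lambda>m. exp (c * s) * exp (- s) ^ m)"
    using s by (intro summable_mult summable_geometric) simp
qed

lemma summable_inv_sq:
  "summable (\<lambda>m. 1 / \<bar>(real m * pi)^2 - c\<bar>)"
proof (rule summable_comparison_test_ev)
  show "summable (\<lambda>m. 2 * inverse (real m ^ 2))"
    by (intro summable_mult inverse_power_summable) auto
  obtain K :: nat where K: "real K \<ge> 2 * \<bar>c\<bar> + 1" using real_arch_simple by blast
  show "eventually (\<lambda>m. norm (1 / \<bar>(real m * pi)^2 - c\<bar>) \<le> 2 * inverse (real m ^ 2)) sequentially"
    unfolding eventually_sequentially
  proof (intro exI allI impI)
    fix m assume m: "m \<ge> K"
    then have "real K \<le> real m" by simp
    then have mK: "real m \<ge> 2 * \<bar>c\<bar> + 1" using K by linarith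
    have m1: "real m \<ge> 1" using mK by linarith
    have "(real m)^2 \<ge> real m" using m1 by (simp add: power2_eq_square)
    have sq: "(real m * pi)^2 \<ge> (real m)^2"
    proof -
      have "(real m)^2 * 1 \<le> (real m)^2 * pi^2"
        using pi_gt3 by (intro mult_left_mono) (use pi_ge_two in \<open>auto simp: power2_eq_square intro: order_trans[OF _ mult_mono[of 1 pi 1 pi]]\<close>)
      then show ?thesis by (simp add: power_mult_distrib)
    qed
    have "(real m)^2 \<ge> 2 * \<bar>c\<bar>" using mK m1 \<open>(real m)^2 \<ge> real m\<close> by linarith
    then have pos: "(real m * pi)^2 - c \<ge> (real m)^2 / 2" using sq by linarith
    have mp: "(real m)^2 > 0" using m1 by simp
    have ab: "\<bar>(real m * pi)^2 - c\<bar> = (real m * pi)^2 - c" using pos mp by linarith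
    have "1 / \<bar>(real m * pi)^2 - c\<bar> \<le> 1 / ((real m)^2 / 2)"
    proof (unfold ab, rule divide_left_mono)
      show "0 < ((real m * pi)^2 - c) * ((real m)^2 / 2)" using pos mp by (intro mult_pos_pos) linarith+
    qed (use pos in auto)
    also have "\<dots> = 2 * inverse (real m ^ 2)" by (simp add: field_simps)
    finally show "norm (1 / \<bar>(real m * pi)^2 - c\<bar>) \<le> 2 * inverse (real m ^ 2)" by simp
  qed
qed

definition eser :: "(nat \<Rightarrow> real) \<Rightarrow> (nat \<Rightarrow> real) \<Rightarrow> real \<Rightarrow> real" where
  "eser d \<nu> t = (\<Sum>m. d m * (exp (\<nu> m * t) - 1) / \<nu> m)"

definition dser :: "(nat \<Rightarrow> real) \<Rightarrow> (nat \<Rightarrow> real) \<Rightarrow> real \<Rightarrow> real" where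
  "dser d \<nu> t = (\<Sum>m. d m * exp (\<nu> m * t))"

locale eser_ok =
  fixes d \<nu> :: "nat \<Rightarrow> real"
  assumes neg: "\<And>m. d m = 0 \<or> \<nu> m < 0"
    and sum1: "summable (\<lambda>m. \<bar>d m\<bar> / \<bar>\<nu> m\<bar>)"
    and sum2: "\<And>s. s > 0 \<Longrightarrow> summable (\<lambda>m. \<bar>d m\<bar> * exp (\<nu> m * s))"
begin

lemma term_bound: "t \<ge> 0 \<Longrightarrow> \<bar>d m * (exp (\<nu> m * t) - 1) / \<nu> m\<bar> \<le> \<bar>d m\<bar> / \<bar>\<nu> m\<bar>"
proof -
  assume t: "t \<ge> 0"
  show ?thesis
  proof (cases "d m = 0")
    case False
    then have nu: "\<nu> m < 0" using neg by auto
    have "exp (\<nu> m * t) \<le> 1" using nu t by (simp add: mult_nonpos_nonneg)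
    moreover have "exp (\<nu> m * t) > 0" by simp
    ultimately have "\<bar>exp (\<nu> m * t) - 1\<bar> \<le> 1" by linarith
    then have "\<bar>d m\<bar> * \<bar>exp (\<nu> m * t) - 1\<bar> \<le> \<bar>d m\<bar> * 1" by (intro mult_left_mono) auto
    then show ?thesis by (simp add: abs_mult abs_divide divide_right_mono)
  qed simp
qed

lemma dterm_bound: "t \<ge> s \<Longrightarrow> \<bar>d m * exp (\<nu> m * t)\<bar> \<le> \<bar>d m\<bar> * exp (\<nu> m * s)"
proof -
  assume t: "t \<ge> s"
  show ?thesis
  proof (cases "d m = 0")
    case False
    then have nu: "\<nu> m < 0" using neg by auto
    have "\<nu> m * t \<le> \<nu> m * s" using nu t by (simp add: mult_left_mono_neg)
    then show ?thesis by (simp add: abs_mult mult_left_mono)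
  qed simp
qed

lemma eser_summable: "t \<ge> 0 \<Longrightarrow> summable (\<lambda>m. d m * (exp (\<nu> m * t) - 1) / \<nu> m)"
  by (rule summable_bound[OF term_bound sum1])

lemma term_cont: "continuous_on S (\<lambda>t. d m * (exp (\<nu> m * t) - 1) / \<nu> m)"
  by (cases "\<nu> m = 0") (auto intro!: continuous_intros)

lemma eser_cont: "continuous_on {0..} (eser d \<nu>)"
  unfolding eser_def[abs_def]
  by (rule series_cont[OF term_cont term_bound sum1]) auto

lemma eser_0: "eser d \<nu> 0 = 0"
  by (simp add: eser_def)

lemma eser_bound: "t \<ge> 0 \<Longrightarrow> \<bar>eser d \<nu> t\<bar> \<le> (\<Sum>m. \<bar>d m\<bar> / \<bar>\<nu> m\<bar>)"
proof -
  assume t: "t \<ge> 0"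
  have s: "summable (\<lambda>m. \<bar>d m * (exp (\<nu> m * t) - 1) / \<nu> m\<bar>)"
    by (rule summable_bound[OF _ sum1]) (use term_bound[OF t] in simp)
  have "\<bar>eser d \<nu> t\<bar> \<le> (\<Sum>m. \<bar>d m * (exp (\<nu> m * t) - 1) / \<nu> m\<bar>)"
    unfolding eser_def by (rule summable_rabs[OF s])
  also have "\<dots> \<le> (\<Sum>m. \<bar>d m\<bar> / \<bar>\<nu> m\<bar>)"
    by (rule suminf_le[OF term_bound[OF t] s sum1])
  finally show ?thesis .
qed

lemma dser_summable: "t > 0 \<Longrightarrow> summable (\<lambda>m. d m * exp (\<nu> m * t))"
  by (rule summable_bound[OF dterm_bound[of t t] sum2]) auto

lemma eser_deriv:
  assumes t: "t > 0"
  shows "(eser d \<nu> has_real_derivative dser d \<nu> t) (at t)"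
proof -
  let ?S = "{t/2..t+1}"
  have deriv: "((\<lambda>x. d m * (exp (\<nu> m * x) - 1) / \<nu> m) has_field_derivative d m * exp (\<nu> m * x)) (at x within ?S)" for m x
  proof (cases "d m = 0")
    case False
    then have nu: "\<nu> m \<noteq> 0" using neg[of m] by auto
    show ?thesis
      using nu by (auto intro!: derivative_eq_intros)
  qed simp
  have "summable (\<lambda>m. d m * (exp (\<nu> m * x) - 1) / \<nu> m) \<and>
        ((\<lambda>x. \<Sum>m. d m * (exp (\<nu> m * x) - 1) / \<nu> m) has_field_derivative (\<Sum>m. d m * exp (\<nu> m * t))) (at t)"
    if x: "x = t" for x
  proof (rule conjI)
    show "summable (\<lambda>m. d m * (exp (\<nu> m * x) - 1) / \<nu> m)" using x t by (intro eser_summable) simp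
    show "((\<lambda>x. \<Sum>m. d m * (exp (\<nu> m * x) - 1) / \<nu> m) has_field_derivative (\<Sum>m. d m * exp (\<nu> m * t))) (at t)"
    proof (rule has_field_derivative_series'(2)[where S="?S" and x0=t])
      show "convex ?S" by simp
      show "\<And>n x. x \<in> ?S \<Longrightarrow> ((\<lambda>x. d n * (exp (\<nu> n * x) - 1) / \<nu> n) has_field_derivative d n * exp (\<nu> n * x)) (at x within ?S)"
        by (rule deriv)
      show "uniformly_convergent_on ?S (\<lambda>n x. \<Sum>i<n. d i * exp (\<nu> i * x))"
      proof (rule Weierstrass_m_test'[where M="\<lambda>m. \<bar>d m\<bar> * exp (\<nu> m * (t/2))"])
        fix n x assume "x \<in> ?S"
        then have "x \<ge> t/2" by simp
        then show "norm (d n * exp (\<nu> n * x)) \<le> \<bar>d n\<bar> * exp (\<nu> n * (t/2))"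
          using dterm_bound[of "t/2" x n] by simp
      next
        show "summable (\<lambda>m. \<bar>d m\<bar> * exp (\<nu> m * (t/2)))" using sum2[of "t/2"] t by simp
      qed
      show "t \<in> ?S" using t by simp
      show "summable (\<lambda>n. d n * (exp (\<nu> n * t) - 1) / \<nu> n)" using t by (intro eser_summable) simp
      show "t \<in> interior ?S" using t by simp
    qed
  qed
  then show ?thesis unfolding eser_def[abs_def] dser_def by simp
qed

end

lemma cont_bound:
  fixes f :: "real \<Rightarrow> real"
  assumes "continuous_on {a..b} f"
  shows "\<exists>G\<ge>0. \<forall>t\<in>{a..b}. \<bar>f t\<bar> \<le> G"
proof -
  have "bounded (f ` {a..b})" by (intro compact_imp_bounded compact_continuous_image assms) auto
  then obtain G where "\<forall>y\<in>f ` {a..b}. norm y \<le> G" by (auto simp: bounded_iff)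
  then have "\<forall>t\<in>{a..b}. \<bar>f t\<bar> \<le> max G 0" by auto
  then show ?thesis by (intro exI[of _ "max G 0"]) auto
qed

lemma indef_cont:
  fixes h :: "real \<Rightarrow> real"
  assumes "continuous_on {a..b} h"
  shows "continuous_on {a..b} (\<lambda>t. integral {a..t} h)"
  unfolding continuous_on_eq_continuous_within
proof
  fix x assume x: "x \<in> {a..b}"
  show "continuous (at x within {a..b}) (\<lambda>t. integral {a..t} h)"
    by (rule DERIV_continuous[OF integral_has_real_derivative[OF assms x]])
qed

lemma indef_cont_half:
  fixes h :: "real \<Rightarrow> real"
  assumes "continuous_on {0..} h"
  shows "continuous_on {0..} (\<lambda>t. integral {0..t} h)"
proof (rule cont_halfline)
  fix T :: real assume "T \<ge> 0"
  show "continuous_on {0..T} (\<lambda>t. integral {0..t} h)"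
    by (rule indef_cont) (rule continuous_on_subset[OF assms], auto)
qed

definition Kop :: "nat \<Rightarrow> (nat \<Rightarrow> real) \<Rightarrow> (nat \<Rightarrow> real) \<Rightarrow> (real \<Rightarrow> real) \<Rightarrow> real \<Rightarrow> real" where
  "Kop N k \<mu> u t = (\<Sum>n\<le>N. k n * exp (\<mu> n * t) * integral {0..t} (\<lambda>s. exp (- \<mu> n * s) * u s))"

primrec piter :: "nat \<Rightarrow> (nat \<Rightarrow> real) \<Rightarrow> (nat \<Rightarrow> real) \<Rightarrow> (real \<Rightarrow> real) \<Rightarrow> nat \<Rightarrow> real \<Rightarrow> real" where
  "piter N k \<mu> g 0 = g"
| "piter N k \<mu> g (Suc j) = Kop N k \<mu> (piter N k \<mu> g j)"

lemma Kop_cont: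
  assumes "continuous_on {0..} u"
  shows "continuous_on {0..} (Kop N k \<mu> u)"
  unfolding Kop_def[abs_def]
  by (intro continuous_intros indef_cont_half continuous_on_mult assms)

lemma piter_cont: "continuous_on {0..} g \<Longrightarrow> continuous_on {0..} (piter N k \<mu> g j)"
  by (induction j) (auto intro: Kop_cont)

lemma int_pow: "t \<ge> 0 \<Longrightarrow> integral {0..t} (\<lambda>s. s ^ j) = t ^ Suc j / real (Suc j)"
proof -
  assume t: "t \<ge> 0"
  have "((\<lambda>s. s ^ j) has_integral (t ^ Suc j / real (Suc j) - 0 ^ Suc j / real (Suc j))) {0..t}"
  proof (rule fundamental_theorem_of_calculus)
    fix x :: real
    have "((\<lambda>s. s ^ Suc j / real (Suc j)) has_real_derivative (real (Suc j) * x ^ j / real (Suc j))) (at x within {0..t})"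
      by (intro derivative_eq_intros DERIV_pow) auto
    then show "((\<lambda>s. s ^ Suc j / real (Suc j)) has_vector_derivative x ^ j) (at x within {0..t})"
      unfolding has_real_derivative_iff_has_vector_derivative[symmetric] by simp
  qed (use t in auto)
  then show ?thesis by (simp add: integral_unique)
qed

lemma piter_bound:
  fixes N :: nat and k \<mu> :: "nat \<Rightarrow> real"
  assumes g: "continuous_on {0..} g" and T: "T \<ge> 0"
    and G: "\<And>t. t \<in> {0..T} \<Longrightarrow> \<bar>g t\<bar> \<le> G"
  defines "\<kappa> \<equiv> (\<Sum>n\<le>N. \<bar>k n\<bar> * exp (2 * \<bar>\<mu> n\<bar> * T))"
  shows "t \<in> {0..T} \<Longrightarrow> \<bar>piter N k \<mu> g j t\<bar> \<le> G * (\<kappa> * t) ^ j / fact j"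
proof (induction j arbitrary: t)
  case 0
  then show ?case using G by simp
next
  case (Suc j)
  have t: "0 \<le> t" "t \<le> T" using Suc.prems by auto
  have k0: "\<kappa> \<ge> 0" unfolding \<kappa>_def by (intro sum_nonneg) auto
  have G0: "G \<ge> 0" using G[of 0] T by (meson abs_ge_zero atLeastAtMost_iff order_trans order_refl)
  have cj: "continuous_on {0..} (piter N k \<mu> g j)" by (rule piter_cont[OF g])
  have tm: "\<bar>k n * exp (\<mu> n * t) * integral {0..t} (\<lambda>s. exp (- \<mu> n * s) * piter N k \<mu> g j s)\<bar>
     \<le> \<bar>k n\<bar> * exp (2 * \<bar>\<mu> n\<bar> * T) * (G * \<kappa> ^ j * t ^ Suc j / fact (Suc j))" for n
  proof -
    have e1: "exp (\<mu> n * t) \<le> exp (\<bar>\<mu> n\<bar> * T)"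
    proof -
      have "\<mu> n * t \<le> \<bar>\<mu> n\<bar> * T" using t by (smt (verit) abs_ge_self abs_ge_zero mult_mono mult_right_mono)
      then show ?thesis by simp
    qed
    have int: "\<bar>integral {0..t} (\<lambda>s. exp (- \<mu> n * s) * piter N k \<mu> g j s)\<bar>
        \<le> integral {0..t} (\<lambda>s. exp (\<bar>\<mu> n\<bar> * T) * (G * \<kappa> ^ j / fact j) * s ^ j)"
    proof (rule int_abs_bound)
      show "(\<lambda>s. exp (- \<mu> n * s) * piter N k \<mu> g j s) integrable_on {0..t}"
        by (intro integrable_continuous_interval continuous_intros continuous_on_subset[OF cj]) auto
      show "(\<lambda>s. exp (\<bar>\<mu> n\<bar> * T) * (G * \<kappa> ^ j / fact j) * s ^ j) integrable_on {0..t}"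
        by (intro integrable_continuous_interval continuous_intros)
      fix s assume s: "s \<in> {0..t}"
      then have sT: "s \<in> {0..T}" using t by auto
      have e2: "exp (- \<mu> n * s) \<le> exp (\<bar>\<mu> n\<bar> * T)"
      proof -
        have "- \<mu> n * s \<le> \<bar>\<mu> n\<bar> * T" using sT by (smt (verit) abs_ge_self abs_ge_zero abs_minus_cancel atLeastAtMost_iff mult_mono mult_right_mono)
        then show ?thesis by simp
      qed
      have "\<bar>piter N k \<mu> g j s\<bar> \<le> G * (\<kappa> * s) ^ j / fact j" by (rule Suc.IH[OF sT])
      also have "\<dots> = (G * \<kappa> ^ j / fact j) * s ^ j" by (simp add: power_mult_distrib)
      finally have pb: "\<bar>piter N k \<mu> g j s\<bar> \<le> (G * \<kappa> ^ j / fact j) * s ^ j" .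
      have "\<bar>exp (- \<mu> n * s) * piter N k \<mu> g j s\<bar> = exp (- \<mu> n * s) * \<bar>piter N k \<mu> g j s\<bar>" by (simp add: abs_mult)
      also have "\<dots> \<le> exp (\<bar>\<mu> n\<bar> * T) * ((G * \<kappa> ^ j / fact j) * s ^ j)"
        using e2 pb by (intro mult_mono) (use s G0 k0 in auto)
      finally show "\<bar>exp (- \<mu> n * s) * piter N k \<mu> g j s\<bar> \<le> exp (\<bar>\<mu> n\<bar> * T) * (G * \<kappa> ^ j / fact j) * s ^ j"
        by (simp add: mult.assoc)
    qed
    also have "\<dots> = exp (\<bar>\<mu> n\<bar> * T) * (G * \<kappa> ^ j / fact j) * (t ^ Suc j / real (Suc j))"
      using int_pow[OF t(1), of j] by simp
    also have "\<dots> = exp (\<bar>\<mu> n\<bar> * T) * (G * \<kappa> ^ j * t ^ Suc j / fact (Suc j))"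
      by (simp add: field_simps)
    finally have int': "\<bar>integral {0..t} (\<lambda>s. exp (- \<mu> n * s) * piter N k \<mu> g j s)\<bar> \<le> exp (\<bar>\<mu> n\<bar> * T) * (G * \<kappa> ^ j * t ^ Suc j / fact (Suc j))" .
    have "\<bar>k n * exp (\<mu> n * t) * integral {0..t} (\<lambda>s. exp (- \<mu> n * s) * piter N k \<mu> g j s)\<bar>
       = \<bar>k n\<bar> * exp (\<mu> n * t) * \<bar>integral {0..t} (\<lambda>s. exp (- \<mu> n * s) * piter N k \<mu> g j s)\<bar>"
      by (simp add: abs_mult)
    also have "\<dots> \<le> \<bar>k n\<bar> * exp (\<bar>\<mu> n\<bar> * T) * (exp (\<bar>\<mu> n\<bar> * T) * (G * \<kappa> ^ j * t ^ Suc j / fact (Suc j)))"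
      using e1 int' by (intro mult_mono) (auto intro: mult_left_mono)
    also have "\<dots> = \<bar>k n\<bar> * exp (2 * \<bar>\<mu> n\<bar> * T) * (G * \<kappa> ^ j * t ^ Suc j / fact (Suc j))"
      by (simp add: exp_add[symmetric] mult.assoc)
    finally show ?thesis .
  qed
  have "\<bar>piter N k \<mu> g (Suc j) t\<bar> \<le> (\<Sum>n\<le>N. \<bar>k n * exp (\<mu> n * t) * integral {0..t} (\<lambda>s. exp (- \<mu> n * s) * piter N k \<mu> g j s)\<bar>)"
    by (simp add: Kop_def sum_abs)
  also have "\<dots> \<le> (\<Sum>n\<le>N. \<bar>k n\<bar> * exp (2 * \<bar>\<mu> n\<bar> * T) * (G * \<kappa> ^ j * t ^ Suc j / fact (Suc j)))"
    by (intro sum_mono tm)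
  also have "\<dots> = \<kappa> * (G * \<kappa> ^ j * t ^ Suc j / fact (Suc j))"
    unfolding \<kappa>_def by (rule sum_distrib_right[symmetric])
  also have "\<dots> = G * (\<kappa> * t) ^ Suc j / fact (Suc j)"
    by (simp add: power_mult_distrib)
  finally show ?case .
qed

lemma volterra:
  fixes N :: nat and k \<mu> :: "nat \<Rightarrow> real" and g :: "real \<Rightarrow> real"
  assumes g: "continuous_on {0..} g"
  shows "\<exists>z. continuous_on {0..} z \<and> (\<forall>t\<ge>0. z t = g t + Kop N k \<mu> z t)"
proof -
  define v where "v = piter N k \<mu> g"
  define z where "z t = (\<Sum>j. v j t)" for t
  have vc: "continuous_on {0..} (v j)" for j unfolding v_def by (rule piter_cont[OF g])
  have unif: "\<exists>M. summable M \<and> (\<forall>j. \<forall>t\<in>{0..T}. \<bar>v j t\<bar> \<le> M j)" if T: "T \<ge> 0" for T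
  proof -
    obtain G where G: "G \<ge> 0" "\<And>t. t \<in> {0..T} \<Longrightarrow> \<bar>g t\<bar> \<le> G"
      using cont_bound[OF continuous_on_subset[OF g, of "{0..T}"]] by auto
    define \<kappa> where "\<kappa> = (\<Sum>n\<le>N. \<bar>k n\<bar> * exp (2 * \<bar>\<mu> n\<bar> * T))"
    have k0: "\<kappa> \<ge> 0" unfolding \<kappa>_def by (intro sum_nonneg) auto
    have "\<bar>v j t\<bar> \<le> G * (inverse (fact j) * (\<kappa> * T) ^ j)" if t: "t \<in> {0..T}" for j t
    proof -
      have "\<bar>v j t\<bar> \<le> G * (\<kappa> * t) ^ j / fact j"
        unfolding v_def \<kappa>_def by (rule piter_bound[OF g T G(2) t])
      also have "\<dots> \<le> G * (\<kappa> * T) ^ j / fact j"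
        using t k0 G(1) by (intro divide_right_mono mult_left_mono power_mono mult_left_mono) auto
      finally show ?thesis by (simp add: field_simps)
    qed
    moreover have "summable (\<lambda>j. G * (inverse (fact j) * (\<kappa> * T) ^ j))"
      by (intro summable_mult summable_exp)
    ultimately show ?thesis by blast
  qed
  have zc: "continuous_on {0..} z"
  proof (rule cont_halfline)
    fix T :: real assume T: "T \<ge> 0"
    obtain M where M: "summable M" "\<And>j t. t\<in>{0..T} \<Longrightarrow> \<bar>v j t\<bar> \<le> M j" using unif[OF T] by blast
    show "continuous_on {0..T} z"
      unfolding z_def[abs_def]
      by (rule series_cont[OF _ M(2) M(1)]) (rule continuous_on_subset[OF vc], auto)
  qed
  have eq: "z t = g t + Kop N k \<mu> z t" if t: "t \<ge> 0" for t
  proof -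
    obtain M where M: "summable M" "\<And>j s. s\<in>{0..t} \<Longrightarrow> \<bar>v j s\<bar> \<le> M j" using unif[OF t] by blast
    have vs: "(\<lambda>j. v j s) sums z s" if "s \<in> {0..t}" for s
      unfolding z_def by (rule summable_sums, rule summable_bound[OF M(2)[OF that] M(1)])
    have In: "(\<lambda>j. integral {0..t} (\<lambda>s. exp (- \<mu> n * s) * v j s)) sums integral {0..t} (\<lambda>s. exp (- \<mu> n * s) * z s)" for n
    proof -
      let ?f = "\<lambda>J s. exp (- \<mu> n * s) * (\<Sum>j<J. v j s)"
      have int_f: "?f J integrable_on {0..t}" for J
        by (intro integrable_continuous_interval continuous_intros continuous_on_subset[OF vc]) auto
      have "(\<lambda>J. integral {0..t} (?f J)) \<longlonglongrightarrow> integral {0..t} (\<lambda>s. exp (- \<mu> n * s) * z s)"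
      proof (rule dominated_convergence(2)[OF int_f])
        show "(\<lambda>s. exp (\<bar>\<mu> n\<bar> * t) * suminf M) integrable_on {0..t}" by (rule integrable_const_ivl)
        fix J :: nat and s :: real assume s: "s \<in> {0..t}"
        have e2: "exp (- \<mu> n * s) \<le> exp (\<bar>\<mu> n\<bar> * t)"
        proof -
          have "- \<mu> n * s \<le> \<bar>\<mu> n\<bar> * t" using s by (smt (verit) abs_ge_self abs_ge_zero abs_minus_cancel atLeastAtMost_iff mult_mono mult_right_mono)
          then show ?thesis by simp
        qed
        have "\<bar>\<Sum>j<J. v j s\<bar> \<le> (\<Sum>j<J. M j)"
          by (rule order_trans[OF sum_abs sum_mono]) (rule M(2)[OF s])
        also have "\<dots> \<le> suminf M"
          using M by (intro sum_le_suminf) (auto intro: order_trans[OF abs_ge_zero M(2)[OF s]])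
        finally have sb: "\<bar>\<Sum>j<J. v j s\<bar> \<le> suminf M" .
        show "norm (?f J s) \<le> exp (\<bar>\<mu> n\<bar> * t) * suminf M"
          using e2 sb by (simp add: abs_mult) (intro mult_mono, auto)
        show "(\<lambda>J. ?f J s) \<longlonglongrightarrow> exp (- \<mu> n * s) * z s"
          using vs[OF s] by (intro tendsto_mult_left) (simp add: sums_def)
      qed
      moreover have "integral {0..t} (?f J) = (\<Sum>j<J. integral {0..t} (\<lambda>s. exp (- \<mu> n * s) * v j s))" for J
        unfolding sum_distrib_left
      proof (rule integral_sum)
        fix j
        have "continuous_on {0..t} (\<lambda>s. exp (- \<mu> n * s) * v j s)"
          by (intro continuous_intros continuous_on_subset[OF vc]) auto
        then show "(\<lambda>s. exp (- \<mu> n * s) * v j s) integrable_on {0..t}"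
          by (rule integrable_continuous_interval)
      qed simp
      ultimately show ?thesis unfolding sums_def by simp
    qed
    have "(\<lambda>j. Kop N k \<mu> (v j) t) sums Kop N k \<mu> z t"
      unfolding Kop_def
      by (intro sums_sum sums_mult In)
    then have "(\<lambda>j. v (Suc j) t) sums Kop N k \<mu> z t" by (simp add: v_def)
    then have "(\<lambda>j. v j t) sums (Kop N k \<mu> z t + v 0 t)" using sums_Suc_iff[of "\<lambda>j. v j t"] by simp
    moreover have "(\<lambda>j. v j t) sums z t" using vs[of t] t by simp
    ultimately have "z t = Kop N k \<mu> z t + v 0 t" by (rule sums_unique2[symmetric])
    then show ?thesis by (simp add: v_def)
  qed
  show ?thesis using zc eq by blast
qed

definition nsq :: "nat \<Rightarrow> (nat \<Rightarrow> real) \<Rightarrow> real" where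
  "nsq N x = (\<Sum>i\<le>N. (x i)^2)"

lemma nsq_nonneg: "nsq N x \<ge> 0"
  unfolding nsq_def by (intro sum_nonneg) auto

lemma quad_cong: "(\<And>i. i \<le> N \<Longrightarrow> x i = y i) \<Longrightarrow> quad N M x = quad N M y"
  unfolding quad_def by (intro sum.cong refl) auto

lemma quad_scale: "quad N M (\<lambda>i. c * x i) = c^2 * quad N M x"
  unfolding quad_def by (simp add: sum_distrib_left power2_eq_square algebra_simps)

lemma quad_cont: "continuous_on UNIV (quad N M)"
  unfolding quad_def[abs_def]
  by (intro continuous_intros continuous_on_product_coordinates)

lemma nsq_cont: "continuous_on UNIV (nsq N)"
  unfolding nsq_def[abs_def]
  by (intro continuous_intros continuous_on_product_coordinates)

lemma pos_def_lower:
  assumes S: "pos_def N S"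
  shows "\<exists>\<eta>>0. \<forall>x. quad N S x \<ge> \<eta> * nsq N x"
proof -
  define K where "K = PiE UNIV (\<lambda>i. if i \<le> N then {-1..1} else {0::real})"
  have "compactin (product_topology (\<lambda>i. euclidean) UNIV) K"
    unfolding K_def compactin_PiE by auto
  then have cK: "compact K" by (simp add: euclidean_product_topology)
  define K1 where "K1 = K \<inter> nsq N -` {1}"
  have "closed (nsq N -` {1})"
    by (rule continuous_closed_vimage) (auto intro: nsq_cont continuous_on_imp_continuous_within)
  then have cK1: "compact K1" unfolding K1_def using cK by (rule compact_Int_closed[rotated])
  define e0 :: "nat \<Rightarrow> real" where "e0 = (\<lambda>i. if i = 0 then 1 else 0)"
  have "e0 \<in> K" unfolding K_def by (simp add: PiE_iff e0_def)
  moreover have "nsq N e0 = (\<Sum>i\<le>N. if i = 0 then 1 else 0)"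
    unfolding nsq_def by (intro sum.cong refl) (simp add: e0_def)
  moreover have "(\<Sum>i\<le>N. if i = 0 then 1 else (0::real)) = 1" by (simp add: sum.delta)
  ultimately have "e0 \<in> K1" by (simp add: K1_def)
  then have ne: "K1 \<noteq> {}" by auto
  obtain x0 where x0: "x0 \<in> K1" "\<And>y. y \<in> K1 \<Longrightarrow> quad N S x0 \<le> quad N S y"
    using continuous_attains_inf[OF cK1 ne continuous_on_subset[OF quad_cont[of N S]]] by blast
  have "nsq N x0 = 1" using x0(1) by (simp add: K1_def)
  then have "\<exists>i\<le>N. x0 i \<noteq> 0"
  proof (rule contrapos_pp)
    assume "\<not> (\<exists>i\<le>N. x0 i \<noteq> 0)"
    then have "nsq N x0 = 0" unfolding nsq_def by (intro sum.neutral) auto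
    then show "nsq N x0 \<noteq> 1" by simp
  qed
  then have eta: "quad N S x0 > 0" using S unfolding pos_def_def by blast
  show ?thesis
  proof (intro exI conjI allI)
    show "quad N S x0 > 0" by (rule eta)
    fix x :: "nat \<Rightarrow> real"
    show "quad N S x \<ge> quad N S x0 * nsq N x"
    proof (cases "nsq N x = 0")
      case True
      have "x i = 0" if "i \<le> N" for i
      proof -
        have "(x i)^2 \<le> nsq N x" unfolding nsq_def using that
          by (intro member_le_sum) auto
        then show ?thesis using True by simp
      qed
      then have "quad N S x = quad N S (\<lambda>i. 0)" by (intro quad_cong) auto
      then show ?thesis using True by (simp add: quad_def)
    next
      case False
      then have pos: "nsq N x > 0" using nsq_nonneg[of N x] by simp
      define r where "r = sqrt (nsq N x)"
      have r: "r > 0" using pos by (simp add: r_def)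
      have r2: "r^2 = nsq N x" using pos by (simp add: r_def)
      define y where "y i = (if i \<le> N then x i / r else 0)" for i
      have ny: "nsq N y = 1"
      proof -
        have "nsq N y = (\<Sum>i\<le>N. (x i)^2 / r^2)" unfolding nsq_def y_def by (intro sum.cong refl) (auto simp: power_divide)
        also have "\<dots> = nsq N x / r^2" unfolding nsq_def by (simp add: sum_divide_distrib)
        finally show ?thesis using r2 pos by simp
      qed
      have yb: "\<bar>y i\<bar> \<le> 1" if i: "i \<le> N" for i
      proof -
        have "(y i)^2 \<le> nsq N y" unfolding nsq_def using i by (intro member_le_sum) auto
        then have "(y i)^2 \<le> 1" using ny by simp
        then show "\<bar>y i\<bar> \<le> 1" by (simp add: abs_square_le_1)
      qed
      have "y \<in> K" unfolding K_def PiE_iff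
      proof (intro conjI ballI)
        fix i :: nat
        show "y i \<in> (if i \<le> N then {-1..1} else {0})"
        proof (cases "i \<le> N")
          case True then show ?thesis using yb[of i] by (simp add: abs_le_iff)
        next
          case False then show ?thesis by (simp add: y_def)
        qed
      qed simp
      then have yK1: "y \<in> K1" using ny by (simp add: K1_def)
      have "quad N S x = quad N S (\<lambda>i. r * y i)"
        using r by (intro quad_cong) (simp add: y_def)
      also have "\<dots> = r^2 * quad N S y" by (rule quad_scale)
      also have "\<dots> \<ge> r^2 * quad N S x0" using x0(2)[OF yK1] by (intro mult_left_mono) auto
      finally show ?thesis using r2 by (simp add: mult.commute)
    qed
  qed
qed

lemma quad_upper: "quad N M x \<le> (\<Sum>i\<le>N. \<Sum>j\<le>N. \<bar>M i j\<bar>) * nsq N x"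
proof -
  have "quad N M x \<le> (\<Sum>i\<le>N. \<Sum>j\<le>N. \<bar>M i j\<bar> * nsq N x)"
    unfolding quad_def
  proof (intro sum_mono)
    fix i j assume i: "i \<in> {..N}" and j: "j \<in> {..N}"
    have xi: "(x i)^2 \<le> nsq N x" unfolding nsq_def using i by (intro member_le_sum) auto
    have xj: "(x j)^2 \<le> nsq N x" unfolding nsq_def using j by (intro member_le_sum) auto
    have "\<bar>x i * x j\<bar> \<le> ((x i)^2 + (x j)^2) / 2"
    proof -
      have "0 \<le> (\<bar>x i\<bar> - \<bar>x j\<bar>)^2" by simp
      then show ?thesis by (simp add: power2_eq_square abs_mult algebra_simps)
    qed
    also have "\<dots> \<le> nsq N x" using xi xj by simp
    finally have "\<bar>x i * x j\<bar> \<le> nsq N x" .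
    then have "\<bar>M i j\<bar> * \<bar>x i * x j\<bar> \<le> \<bar>M i j\<bar> * nsq N x" by (intro mult_left_mono) auto
    moreover have "x i * M i j * x j \<le> \<bar>x i * M i j * x j\<bar>" by (rule abs_ge_self)
    moreover have "\<bar>x i * M i j * x j\<bar> = \<bar>M i j\<bar> * \<bar>x i * x j\<bar>" by (simp add: abs_mult)
    ultimately show "x i * M i j * x j \<le> \<bar>M i j\<bar> * nsq N x" by linarith
  qed
  also have "\<dots> = (\<Sum>i\<le>N. \<Sum>j\<le>N. \<bar>M i j\<bar>) * nsq N x" by (simp add: sum_distrib_right)
  finally show ?thesis .
qed

lemma quad_lyap:
  assumes sym: "\<And>i j. i \<le> N \<Longrightarrow> j \<le> N \<Longrightarrow> Q i j = Q j i"
  shows "quad N (\<lambda>i j. mmul N Q M i j + mmul N (transp_mat M) Q i j) p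
       = 2 * (\<Sum>i\<le>N. \<Sum>j\<le>N. p i * Q i j * (\<Sum>k\<le>N. M j k * p k))"
proof -
  have A: "quad N (mmul N Q M) p = (\<Sum>i\<le>N. \<Sum>j\<le>N. p i * Q i j * (\<Sum>k\<le>N. M j k * p k))"
  proof -
    have "quad N (mmul N Q M) p = (\<Sum>i\<le>N. \<Sum>k\<le>N. \<Sum>j\<le>N. p i * Q i j * M j k * p k)"
      unfolding quad_def mmul_def
      by (intro sum.cong refl) (simp add: sum_distrib_left sum_distrib_right mult.assoc)
    also have "\<dots> = (\<Sum>i\<le>N. \<Sum>j\<le>N. \<Sum>k\<le>N. p i * Q i j * M j k * p k)"
      by (rule sum.cong[OF refl], rule sum.swap)
    also have "\<dots> = (\<Sum>i\<le>N. \<Sum>j\<le>N. p i * Q i j * (\<Sum>k\<le>N. M j k * p k))"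
      by (intro sum.cong refl) (simp add: sum_distrib_left mult.assoc)
    finally show ?thesis .
  qed
  have B: "quad N (mmul N (transp_mat M) Q) p = (\<Sum>i\<le>N. \<Sum>j\<le>N. p i * Q i j * (\<Sum>k\<le>N. M j k * p k))"
  proof -
    have "quad N (mmul N (transp_mat M) Q) p = (\<Sum>i\<le>N. \<Sum>k\<le>N. \<Sum>j\<le>N. p i * M j i * Q j k * p k)"
      unfolding quad_def mmul_def transp_mat_def
      by (intro sum.cong refl) (simp add: sum_distrib_left sum_distrib_right mult.assoc)
    also have "\<dots> = (\<Sum>k\<le>N. \<Sum>i\<le>N. \<Sum>j\<le>N. p i * M j i * Q j k * p k)"
      by (rule sum.swap)
    also have "\<dots> = (\<Sum>k\<le>N. \<Sum>j\<le>N. \<Sum>i\<le>N. p i * M j i * Q j k * p k)"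
      by (rule sum.cong[OF refl], rule sum.swap)
    also have "\<dots> = (\<Sum>k\<le>N. \<Sum>j\<le>N. p k * Q k j * (\<Sum>i\<le>N. M j i * p i))"
    proof (intro sum.cong refl)
      fix k j assume "k \<in> {..N}" "j \<in> {..N}"
      then have "Q j k = Q k j" using sym by auto
      then show "(\<Sum>i\<le>N. p i * M j i * Q j k * p k) = p k * Q k j * (\<Sum>i\<le>N. M j i * p i)"
        by (simp add: sum_distrib_left mult.commute mult.left_commute)
    qed
    finally show ?thesis .
  qed
  have "quad N (\<lambda>i j. mmul N Q M i j + mmul N (transp_mat M) Q i j) p = quad N (mmul N Q M) p + quad N (mmul N (transp_mat M) Q) p"
    unfolding quad_def by (simp add: sum.distrib algebra_simps)
  then show ?thesis using A B by simp
qed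

lemma quad_lin: "quad N (\<lambda>i j. c * A i j - B i j) x = c * quad N A x - quad N B x"
  unfolding quad_def by (simp add: sum_distrib_left sum_subtractf algebra_simps)

lemma young2: "(e::real) > 0 \<Longrightarrow> 2 * w * X \<le> e * X^2 + w^2 / e"
proof -
  assume e: "e > 0"
  have "0 \<le> (e * X - w)^2 / e" using e by simp
  also have "(e * X - w)^2 / e = e * X^2 + w^2 / e - 2 * w * X"
    using e by (simp add: power2_diff field_simps power2_eq_square)
  finally show ?thesis by simp
qed

lemma nonincr:
  fixes f f' :: "real \<Rightarrow> real"
  assumes t: "t \<ge> 0" and c: "continuous_on {0..t} f"
    and d: "\<And>s. 0 < s \<Longrightarrow> s < t \<Longrightarrow> (f has_real_derivative f' s) (at s) \<and> f' s \<le> 0"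
  shows "f t \<le> f 0"
proof (cases "t = 0")
  case False
  then have t0: "0 < t" using t by simp
  obtain l z where z: "0 < z" "z < t" "DERIV f z :> l" "f t - f 0 = (t - 0) * l"
    using MVT[OF t0 c] d by (meson real_differentiable_def)
  have "l = f' z" using d[OF z(1,2)] z(3) DERIV_unique by blast
  then have "l \<le> 0" using d[OF z(1,2)] by simp
  then have "(t - 0) * l \<le> 0" using t by (simp add: mult_nonneg_nonpos)
  then show ?thesis using z(4) by simp
qed simp

lemma lyapunov:
  fixes N :: nat and Q M :: "nat \<Rightarrow> nat \<Rightarrow> real" and l :: "nat \<Rightarrow> real" and \<delta> :: real
  assumes Q: "pos_def N Q"
    and S: "mat_less N (\<lambda>i j. mmul N Q M i j + mmul N (transp_mat M) Q i j) (\<lambda>i j. - 2 * \<delta> * Q i j)"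
  shows "\<exists>K>0. \<forall>p w \<Phi> \<phi>' \<Phi>m W.
     (\<forall>i\<le>N. continuous_on {0..} (p i)) \<and>
     (\<forall>t>0. \<forall>i\<le>N. (p i has_real_derivative (\<Sum>j\<le>N. M i j * p j t) + l i * w t) (at t)) \<and>
     continuous_on {0..} \<Phi> \<and> \<Phi> 0 = 0 \<and> (\<forall>t\<ge>0. \<Phi> t \<le> \<Phi>m) \<and>
     (\<forall>t>0. (\<Phi> has_real_derivative \<phi>' t) (at t)) \<and>
     W \<ge> 0 \<and> (\<forall>t>0. exp (2 * \<delta> * t) * (w t)^2 \<le> W * \<phi>' t)
     \<longrightarrow> (\<forall>t\<ge>0. nsq N (\<lambda>i. p i t) \<le> exp (- 2 * \<delta> * t) * K * (nsq N (\<lambda>i. p i 0) + W * \<Phi>m))"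
proof -
  let ?X = "\<lambda>i j. mmul N Q M i j + mmul N (transp_mat M) Q i j"
  have sym: "\<And>i j. i \<le> N \<Longrightarrow> j \<le> N \<Longrightarrow> Q i j = Q j i" using Q by (simp add: pos_def_def)
  obtain \<eta> where \<eta>: "\<eta> > 0" "\<And>x. quad N (\<lambda>i j. - 2 * \<delta> * Q i j - ?X i j) x \<ge> \<eta> * nsq N x"
    using pos_def_lower[of N "\<lambda>i j. - 2 * \<delta> * Q i j - ?X i j"] S unfolding mat_less_def by blast
  obtain q where q: "q > 0" "\<And>x. quad N Q x \<ge> q * nsq N x"
    using pos_def_lower[OF Q] by blast
  define Qm where "Qm = (\<Sum>i\<le>N. \<Sum>j\<le>N. \<bar>Q i j\<bar>)"
  have Qm0: "Qm \<ge> 0" unfolding Qm_def by (intro sum_nonneg) auto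
  define ql where "ql i = (\<Sum>j\<le>N. Q i j * l j)" for i
  define \<kappa> where "\<kappa> = nsq N ql + 1"
  have \<kappa>: "\<kappa> > 0" "nsq N ql \<le> \<kappa>" using nsq_nonneg[of N ql] by (auto simp: \<kappa>_def)
  define K where "K = (Qm + \<kappa> / \<eta>) / q"
  have K: "K > 0" unfolding K_def using Qm0 \<kappa> \<eta> q by (intro divide_pos_pos add_nonneg_pos) auto
  show ?thesis
  proof (intro exI[of _ K] conjI K allI impI)
    fix p w \<Phi> \<phi>' \<Phi>m W t :: "_"
    assume H: "(\<forall>i\<le>N. continuous_on {0..} (p i)) \<and>
     (\<forall>t>0. \<forall>i\<le>N. (p i has_real_derivative (\<Sum>j\<le>N. M i j * p j t) + l i * w t) (at t)) \<and>
     continuous_on {0..} \<Phi> \<and> \<Phi> 0 = 0 \<and> (\<forall>t\<ge>0. \<Phi> t \<le> \<Phi>m) \<and>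
     (\<forall>t>0. (\<Phi> has_real_derivative \<phi>' t) (at t)) \<and>
     W \<ge> 0 \<and> (\<forall>t>0. exp (2 * \<delta> * t) * (w t)^2 \<le> W * \<phi>' t)"
    assume t: "0 \<le> (t::real)"
    have pc: "\<And>i. i \<le> N \<Longrightarrow> continuous_on {0..} (p i)" using H by blast
    have pd: "\<And>s i. s > 0 \<Longrightarrow> i \<le> N \<Longrightarrow> (p i has_real_derivative (\<Sum>j\<le>N. M i j * p j s) + l i * w s) (at s)"
      using H by blast
    have \<Phi>c: "continuous_on {0..} \<Phi>" and \<Phi>0: "\<Phi> 0 = 0" and \<Phi>m: "\<And>s. s \<ge> 0 \<Longrightarrow> \<Phi> s \<le> \<Phi>m"
      and \<Phi>d: "\<And>s. s > 0 \<Longrightarrow> (\<Phi> has_real_derivative \<phi>' s) (at s)"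
      and W: "W \<ge> 0" and wW: "\<And>s. s > 0 \<Longrightarrow> exp (2 * \<delta> * s) * (w s)^2 \<le> W * \<phi>' s"
      using H by auto
    define V where "V s = quad N Q (\<lambda>i. p i s)" for s
    define pd' where "pd' s j = (\<Sum>k\<le>N. M j k * p k s) + l j * w s" for s j
    define V' where "V' s = 2 * (\<Sum>i\<le>N. \<Sum>j\<le>N. p i s * Q i j * pd' s j)" for s
    have Vc: "continuous_on {0..} V"
      unfolding V_def quad_def by (intro continuous_intros pc) auto
    have Vd: "(V has_real_derivative V' s) (at s)" if s: "s > 0" for s
    proof -
      have "(V has_real_derivative (\<Sum>i\<le>N. \<Sum>j\<le>N. pd' s i * Q i j * p j s + p i s * Q i j * pd' s j)) (at s)"
        unfolding V_def quad_def
      proof (intro DERIV_sum)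
        fix i j assume i: "i \<in> {..N}" and j: "j \<in> {..N}"
        have di: "(p i has_real_derivative pd' s i) (at s)" using pd[OF s] i by (simp add: pd'_def)
        have dj: "(p j has_real_derivative pd' s j) (at s)" using pd[OF s] j by (simp add: pd'_def)
        show "((\<lambda>x. p i x * Q i j * p j x) has_real_derivative pd' s i * Q i j * p j s + p i s * Q i j * pd' s j) (at s)"
          using DERIV_mult[OF DERIV_cmult_right[OF di, of "Q i j"] dj] by (simp add: algebra_simps)
      qed
      also have "(\<Sum>i\<le>N. \<Sum>j\<le>N. pd' s i * Q i j * p j s + p i s * Q i j * pd' s j) = V' s"
      proof -
        have "(\<Sum>i\<le>N. \<Sum>j\<le>N. pd' s i * Q i j * p j s) = (\<Sum>j\<le>N. \<Sum>i\<le>N. pd' s i * Q i j * p j s)"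
          by (rule sum.swap)
        also have "\<dots> = (\<Sum>j\<le>N. \<Sum>i\<le>N. p j s * Q j i * pd' s i)"
          using sym by (intro sum.cong refl) (auto simp: mult.commute mult.left_commute)
        finally have e: "(\<Sum>i\<le>N. \<Sum>j\<le>N. pd' s i * Q i j * p j s) = (\<Sum>j\<le>N. \<Sum>i\<le>N. p j s * Q j i * pd' s i)" .
        show ?thesis unfolding V'_def sum.distrib e by simp
      qed
      finally show ?thesis .
    qed
    have V'b: "V' s \<le> - 2 * \<delta> * V s + (\<kappa> / \<eta>) * (w s)^2" for s
    proof -
      let ?p = "\<lambda>i. p i s"
      have "V' s = quad N ?X ?p + 2 * w s * (\<Sum>i\<le>N. p i s * ql i)"
      proof -
        have "V' s = 2 * (\<Sum>i\<le>N. \<Sum>j\<le>N. p i s * Q i j * (\<Sum>k\<le>N. M j k * p k s)) + 2 * (\<Sum>i\<le>N. \<Sum>j\<le>N. p i s * Q i j * (l j * w s))"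
          unfolding V'_def pd'_def by (simp add: distrib_left sum.distrib)
        also have "(\<Sum>i\<le>N. \<Sum>j\<le>N. p i s * Q i j * (l j * w s)) = w s * (\<Sum>i\<le>N. p i s * ql i)"
          unfolding ql_def by (simp add: sum_distrib_left sum_distrib_right mult.commute mult.left_commute)
        finally show ?thesis using quad_lyap[OF sym, where M=M and p="\<lambda>i. p i s"] by simp
      qed
      also have "quad N ?X ?p = - 2 * \<delta> * V s - quad N (\<lambda>i j. - 2 * \<delta> * Q i j - ?X i j) ?p"
        using quad_lin[of N "- 2 * \<delta>" Q ?X ?p] by (simp add: V_def)
      also have "2 * w s * (\<Sum>i\<le>N. p i s * ql i) \<le> (\<eta> / \<kappa>) * (\<Sum>i\<le>N. p i s * ql i)^2 + (w s)^2 / (\<eta> / \<kappa>)"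
        using \<eta> \<kappa> by (intro young2) simp
      also have "(\<eta> / \<kappa>) * (\<Sum>i\<le>N. p i s * ql i)^2 \<le> \<eta> * nsq N ?p"
      proof -
        have "(\<Sum>i\<le>N. p i s * ql i)^2 \<le> nsq N ?p * nsq N ql"
          unfolding nsq_def by (rule Cauchy_Schwarz_ineq_sum)
        also have "\<dots> \<le> nsq N ?p * \<kappa>" using \<kappa> nsq_nonneg[of N ?p] by (intro mult_left_mono) auto
        finally have "(\<eta> / \<kappa>) * (\<Sum>i\<le>N. p i s * ql i)^2 \<le> (\<eta> / \<kappa>) * (nsq N ?p * \<kappa>)"
          using \<eta> \<kappa> by (intro mult_left_mono) auto
        then show ?thesis using \<kappa> by simp
      qed
      finally show ?thesis using \<eta>(2)[of ?p] by (simp add: field_simps)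
    qed
    define \<Psi> where "\<Psi> s = exp (2 * \<delta> * s) * V s - (\<kappa> / \<eta>) * W * \<Phi> s" for s
    have "\<Psi> t \<le> \<Psi> 0"
    proof (rule nonincr[OF t])
      show "continuous_on {0..t} \<Psi>"
        unfolding \<Psi>_def
        by (intro continuous_intros continuous_on_subset[OF Vc] continuous_on_subset[OF \<Phi>c]) auto
      fix s :: real assume s: "0 < s" "s < t"
      let ?d = "2 * \<delta> * exp (2 * \<delta> * s) * V s + exp (2 * \<delta> * s) * V' s - (\<kappa> / \<eta>) * W * \<phi>' s"
      have "(\<Psi> has_real_derivative ?d) (at s)"
        unfolding \<Psi>_def
        using \<eta>(1) by (auto intro!: derivative_eq_intros Vd[OF s(1)] \<Phi>d[OF s(1)])
      moreover have "?d \<le> 0"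
      proof -
        have "exp (2 * \<delta> * s) * V' s \<le> exp (2 * \<delta> * s) * (- 2 * \<delta> * V s + (\<kappa> / \<eta>) * (w s)^2)"
          using V'b[of s] by (intro mult_left_mono) auto
        moreover have "(\<kappa> / \<eta>) * (exp (2 * \<delta> * s) * (w s)^2) \<le> (\<kappa> / \<eta>) * (W * \<phi>' s)"
          using wW[OF s(1)] \<kappa> \<eta> by (intro mult_left_mono) auto
        ultimately show ?thesis by (simp add: algebra_simps)
      qed
      ultimately show "(\<Psi> has_real_derivative ?d) (at s) \<and> ?d \<le> 0" by blast
    qed
    then have "exp (2 * \<delta> * t) * V t \<le> V 0 + (\<kappa> / \<eta>) * W * \<Phi> t"
      unfolding \<Psi>_def using \<Phi>0 by simp
    also have "\<dots> \<le> Qm * nsq N (\<lambda>i. p i 0) + (\<kappa> / \<eta>) * W * \<Phi>m"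
    proof (intro add_mono)
      show "V 0 \<le> Qm * nsq N (\<lambda>i. p i 0)" unfolding V_def Qm_def by (rule quad_upper)
      show "(\<kappa> / \<eta>) * W * \<Phi> t \<le> (\<kappa> / \<eta>) * W * \<Phi>m"
        using \<Phi>m[OF t] \<kappa> \<eta> W by (intro mult_left_mono) auto
    qed
    also have "\<dots> \<le> (Qm + \<kappa> / \<eta>) * (nsq N (\<lambda>i. p i 0) + W * \<Phi>m)"
    proof -
      have "\<Phi>m \<ge> 0" using \<Phi>m[of 0] \<Phi>0 by simp
      then have "W * \<Phi>m \<ge> 0" using W by simp
      moreover have "nsq N (\<lambda>i. p i 0) \<ge> 0" by (rule nsq_nonneg)
      ultimately show ?thesis using Qm0 \<kappa> \<eta> by (simp add: algebra_simps)
    qed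
    finally have A: "exp (2 * \<delta> * t) * V t \<le> (Qm + \<kappa> / \<eta>) * (nsq N (\<lambda>i. p i 0) + W * \<Phi>m)" .
    have "q * nsq N (\<lambda>i. p i t) \<le> V t" unfolding V_def by (rule q(2))
    then have "exp (2 * \<delta> * t) * (q * nsq N (\<lambda>i. p i t)) \<le> exp (2 * \<delta> * t) * V t" by simp
    with A have "exp (2 * \<delta> * t) * (q * nsq N (\<lambda>i. p i t)) \<le> (Qm + \<kappa> / \<eta>) * (nsq N (\<lambda>i. p i 0) + W * \<Phi>m)" by linarith
    then have "nsq N (\<lambda>i. p i t) \<le> exp (- 2 * \<delta> * t) * ((Qm + \<kappa> / \<eta>) * (nsq N (\<lambda>i. p i 0) + W * \<Phi>m)) / q"
      using q(1) by (simp add: field_simps exp_minus exp_gt_zero)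
    also have "\<dots> = exp (- 2 * \<delta> * t) * K * (nsq N (\<lambda>i. p i 0) + W * \<Phi>m)"
      using \<eta>(1) q(1) by (simp add: K_def field_simps)
    finally show "nsq N (\<lambda>i. p i t) \<le> exp (- 2 * \<delta> * t) * K * (nsq N (\<lambda>i. p i 0) + W * \<Phi>m)" .
  qed
qed

lemma phi_bound: "\<bar>phi n x\<bar> \<le> sqrt 2"
proof -
  have "\<bar>cos (real n * pi * x)\<bar> \<le> 1" by (rule abs_cos_le_one)
  then have "sqrt 2 * \<bar>cos (real n * pi * x)\<bar> \<le> sqrt 2 * 1" by (intro mult_left_mono) auto
  then show ?thesis by (auto simp: phi_def abs_mult)
qed

lemma phi_0: "phi n 0 = Cvec n"
  by (simp add: phi_def Cvec_def)

lemma Lfun_cpoly: "Lfun N l = cpoly l N"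
  by (simp add: Lfun_def cpoly_def fun_eq_iff)

lemma coef_Lfun: "ip (Lfun N l) (phi n) = (if n \<le> N then l n else 0)"
  by (simp add: Lfun_cpoly ip_cpoly_phi)

definition cser :: "(nat \<Rightarrow> real) \<Rightarrow> real \<Rightarrow> real" where
  "cser d x = (\<Sum>n. d n * phi n x)"

lemma cser_term_bound: "\<bar>d n * phi n x\<bar> \<le> sqrt 2 * \<bar>d n\<bar>"
  using phi_bound[of n x] by (simp add: abs_mult mult.commute mult_left_mono)

lemma cser_summable: "summable (\<lambda>n. \<bar>d n\<bar>) \<Longrightarrow> summable (\<lambda>n. d n * phi n x)"
  by (rule summable_bound[OF cser_term_bound]) (rule summable_mult)

lemma cser_cont: "summable (\<lambda>n. \<bar>d n\<bar>) \<Longrightarrow> continuous_on A (cser d)"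
  unfolding cser_def[abs_def]
  by (rule series_cont[OF _ cser_term_bound]) (auto intro!: continuous_intros cont_phi summable_mult)

lemma L2_cser: "summable (\<lambda>n. \<bar>d n\<bar>) \<Longrightarrow> L2 (cser d)"
  by (rule L2_cont[OF cser_cont])

lemma coef_cser:
  assumes d: "summable (\<lambda>n. \<bar>d n\<bar>)"
  shows "coef (cser d) m = d m"
proof -
  let ?f = "\<lambda>J x. (\<Sum>n<J. d n * phi n x) * phi m x"
  have int_f: "?f J integrable_on {0..1}" for J
    by (intro integrable_continuous_interval continuous_intros cont_phi)
  have lim1: "(\<lambda>J. integral {0..1} (?f J)) \<longlonglongrightarrow> integral {0..1} (\<lambda>x. cser d x * phi m x)"
  proof (rule dominated_convergence(2)[OF int_f])
    show "(\<lambda>x. sqrt 2 * (\<Sum>n. \<bar>d n\<bar>) * sqrt 2) integrable_on {0..1::real}" by (rule integrable_const_ivl)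
    fix J :: nat and x :: real assume "x \<in> {0..1}"
    have "\<bar>\<Sum>n<J. d n * phi n x\<bar> \<le> (\<Sum>n<J. sqrt 2 * \<bar>d n\<bar>)"
      by (rule order_trans[OF sum_abs sum_mono]) (rule cser_term_bound)
    also have "\<dots> \<le> sqrt 2 * (\<Sum>n. \<bar>d n\<bar>)"
      unfolding sum_distrib_left[symmetric] using d by (intro mult_left_mono sum_le_suminf) auto
    finally have "\<bar>\<Sum>n<J. d n * phi n x\<bar> \<le> sqrt 2 * (\<Sum>n. \<bar>d n\<bar>)" .
    then show "norm (?f J x) \<le> sqrt 2 * (\<Sum>n. \<bar>d n\<bar>) * sqrt 2"
      using phi_bound[of m x] by (simp add: abs_mult) (intro mult_mono, auto)
    show "(\<lambda>J. ?f J x) \<longlonglongrightarrow> cser d x * phi m x"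
      unfolding cser_def using summable_sums[OF cser_summable[OF d, of x]]
      by (intro tendsto_mult_right) (simp add: sums_def)
  qed
  have e1: "integral {0..1} (?f J) = (\<Sum>n<J. d n * ip (phi n) (phi m))" for J
  proof -
    have "integral {0..1} (?f J) = ip (\<lambda>x. \<Sum>n<J. d n * phi n x) (phi m)" by (simp add: ip_def)
    also have "\<dots> = (\<Sum>n<J. ip (\<lambda>x. d n * phi n x) (phi m))"
      by (rule ip_sum) (auto intro: L2_cmult L2_phi)
    finally show ?thesis by (simp add: ip_cmult)
  qed
  have e2: "(\<Sum>n<J. d n * ip (phi n) (phi m)) = (if m < J then d m else 0)" for J
    by (simp add: phi_ortho if_distrib[of "\<lambda>y. _ * y"] sum.delta' cong: if_cong)
  have lim2: "(\<lambda>J. if m < J then d m else 0) \<longlonglongrightarrow> d m"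
  proof (rule tendsto_eventually)
    show "eventually (\<lambda>J. (if m < J then d m else 0) = d m) sequentially"
      unfolding eventually_sequentially by (intro exI[of _ "Suc m"]) auto
  qed
  have "(\<lambda>J. integral {0..1} (?f J)) \<longlonglongrightarrow> d m" using lim2 by (simp add: e1 e2)
  then show ?thesis unfolding coef_def ip_def using lim1 by (rule LIMSEQ_unique[rotated])
qed

lemma parseval_cser:
  assumes "summable (\<lambda>n. \<bar>d n\<bar>)"
  shows "(\<lambda>n. (d n)^2) sums ip (cser d) (cser d)"
  using parseval[OF L2_cser[OF assms]] coef_cser[OF assms] by simp

lemma cont_zero:
  assumes h: "continuous_on {0..1} h" and z: "ip h h = 0" and x: "x \<in> {0..1::real}"
  shows "h x = 0"
proof -
  have c: "continuous_on (cbox 0 1) (\<lambda>x. h x * h x)" using h by (auto intro!: continuous_intros simp: cbox_interval)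
  have "((\<lambda>x. h x * h x) has_integral 0) (cbox 0 1)"
  proof -
    have "(\<lambda>x. h x * h x) integrable_on {0..1}" by (intro integrable_continuous_interval continuous_intros h)
    then show ?thesis using z by (simp add: ip_def cbox_interval has_integral_integral[symmetric])
      (metis has_integral_integral)
  qed
  then have "h x * h x = 0"
    using has_integral_0_cbox_imp_0[OF c _ _ _ , of x] x by (auto simp: cbox_interval box_real)
  then show ?thesis by simp
qed

lemma L2norm_zero: "L2norm f = 0 \<longleftrightarrow> ip f f = 0"
  by (simp add: L2norm_ip)

lemma ev_within_half: "\<forall>\<^sub>F t in at t0 within {0..}. t \<in> {(0::real)..}"
  by (simp add: eventually_at_filter)

lemma sol_L2: "is_solution a N l e0 e \<Longrightarrow> t \<ge> 0 \<Longrightarrow> L2 (\<lambda>x. e x t)"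
  by (simp add: is_solution_def)

lemma sol_coef_cont:
  assumes sol: "is_solution a N l e0 e"
  shows "continuous_on {0..} (\<lambda>t. coef (\<lambda>x. e x t) n)"
  unfolding continuous_on_def
proof
  fix t0 :: real assume "t0 \<in> {0..}"
  then have t0: "t0 \<ge> 0" by simp
  have lim: "((\<lambda>t. L2norm (\<lambda>x. e x t - e x t0)) \<longlongrightarrow> 0) (at t0 within {0..})"
    using sol t0 by (simp add: is_solution_def)
  have "((\<lambda>t. coef (\<lambda>x. e x t) n - coef (\<lambda>x. e x t0) n) \<longlongrightarrow> 0) (at t0 within {0..})"
  proof (rule Lim_null_comparison[OF _ lim])
    show "\<forall>\<^sub>F t in at t0 within {0..}. norm (coef (\<lambda>x. e x t) n - coef (\<lambda>x. e x t0) n) \<le> L2norm (\<lambda>x. e x t - e x t0)"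
      using ev_within_half
    proof (rule eventually_mono)
      fix t :: real assume "t \<in> {0..}"
      then have L: "L2 (\<lambda>x. e x t)" "L2 (\<lambda>x. e x t0)" using sol_L2[OF sol] t0 by auto
      have "coef (\<lambda>x. e x t) n - coef (\<lambda>x. e x t0) n = ip (\<lambda>x. e x t - e x t0) (phi n)"
        unfolding coef_def by (rule ip_diff[OF L L2_phi, symmetric])
      also have "\<bar>\<dots>\<bar> \<le> sqrt (ip (\<lambda>x. e x t - e x t0) (\<lambda>x. e x t - e x t0)) * sqrt (ip (phi n) (phi n))"
        by (rule cauchy_schwarz_ip[OF L2_diff[OF L] L2_phi])
      finally show "norm (coef (\<lambda>x. e x t) n - coef (\<lambda>x. e x t0) n) \<le> L2norm (\<lambda>x. e x t - e x t0)"
        by (simp add: phi_ortho L2norm_ip)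
    qed
  qed
  then show "((\<lambda>t. coef (\<lambda>x. e x t) n) \<longlongrightarrow> coef (\<lambda>x. e x t0) n) (at t0 within {0..})"
    by (simp add: LIM_zero_iff)
qed

lemma sol_coef_deriv:
  assumes sol: "is_solution a N l e0 e" and t: "t > 0"
  shows "((\<lambda>s. coef (\<lambda>x. e x s) n) has_real_derivative
           (a - lam n) * coef (\<lambda>x. e x t) n + e 0 t * (if n \<le> N then l n else 0)) (at t)"
proof -
  have "((\<lambda>s. ip (\<lambda>x. e x s) (phi n)) has_real_derivative
         (a - lam n) * ip (\<lambda>x. e x t) (phi n) + e 0 t * ip (Lfun N l) (phi n)) (at t)"
    using sol t unfolding is_solution_def ip_def by blast
  then show ?thesis unfolding coef_Lfun coef_def .
qed

lemma const_from_deriv: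
  fixes h :: "real \<Rightarrow> real"
  assumes t: "t \<ge> 0" and c: "continuous_on {0..} h"
    and d: "\<And>s. s > 0 \<Longrightarrow> (h has_real_derivative 0) (at s)"
  shows "h t = h 0"
proof -
  have c': "continuous_on {0..t} h" by (rule continuous_on_subset[OF c]) auto
  have "h t \<le> h 0" by (rule nonincr[OF t c', of "\<lambda>s. 0"]) (use d in auto)
  moreover have "- h t \<le> - h 0"
    by (rule nonincr[OF t _, of "\<lambda>s. - h s" "\<lambda>s. 0"]) (auto intro!: continuous_intros c' derivative_eq_intros d)
  ultimately show ?thesis by simp
qed

theorem uniqueness:
  assumes s1: "is_solution a N l e0 e1" and s2: "is_solution a N l e0 e2" and Le0: "L2 e0"
  shows "\<forall>t\<ge>0. L2norm (\<lambda>x. e2 x t - e1 x t) = 0"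
proof -
  define f where "f t x = e2 x t - e1 x t" for t x
  have Lf: "L2 (f t)" if "t \<ge> 0" for t unfolding f_def[abs_def] using sol_L2[OF s2 that] sol_L2[OF s1 that] by (rule L2_diff)
  define P where "P n t = coef (\<lambda>x. e2 x t) n - coef (\<lambda>x. e1 x t) n" for n t
  have Pcoef: "P n t = coef (f t) n" if "t \<ge> 0" for n t
    unfolding P_def coef_def f_def[abs_def] using sol_L2[OF s1 that] sol_L2[OF s2 that]
    by (simp add: ip_diff L2_phi)
  have Pc: "continuous_on {0..} (P n)" for n
    unfolding P_def[abs_def] by (intro continuous_intros sol_coef_cont[OF s1] sol_coef_cont[OF s2])
  define \<mu> where "\<mu> n = a - lam n" for n
  define g where "g t = e2 0 t - e1 0 t" for t
  have Pd: "(P n has_real_derivative \<mu> n * P n t + g t * (if n \<le> N then l n else 0)) (at t)" if t: "t > 0" for n t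
  proof -
    have "(P n has_real_derivative ((a - lam n) * coef (\<lambda>x. e2 x t) n + e2 0 t * (if n \<le> N then l n else 0))
           - ((a - lam n) * coef (\<lambda>x. e1 x t) n + e1 0 t * (if n \<le> N then l n else 0))) (at t)"
      unfolding P_def[abs_def] by (intro DERIV_diff sol_coef_deriv[OF s2 t] sol_coef_deriv[OF s1 t])
    then show ?thesis by (simp add: \<mu>_def g_def P_def algebra_simps)
  qed
  have f0: "ip (f 0) (f 0) = 0"
  proof -
    have L0: "L2 (\<lambda>x. e1 x 0)" "L2 (\<lambda>x. e2 x 0)" using sol_L2[OF s1] sol_L2[OF s2] by auto
    have z1: "ip (\<lambda>x. e1 x 0 - e0 x) (\<lambda>x. e1 x 0 - e0 x) = 0" using s1 by (simp add: is_solution_def L2norm_ip)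
    have z2: "ip (\<lambda>x. e2 x 0 - e0 x) (\<lambda>x. e2 x 0 - e0 x) = 0" using s2 by (simp add: is_solution_def L2norm_ip)
    have "ip (\<lambda>x. (e2 x 0 - e0 x) - (e1 x 0 - e0 x)) (\<lambda>x. (e2 x 0 - e0 x) - (e1 x 0 - e0 x)) \<le> 0"
      using ip_diff_le[OF L2_diff[OF L0(2) Le0] L2_diff[OF L0(1) Le0]] z1 z2 by simp
    moreover have "(\<lambda>x. (e2 x 0 - e0 x) - (e1 x 0 - e0 x)) = f 0" by (simp add: f_def fun_eq_iff)
    ultimately show ?thesis using ip_self_nonneg[of "f 0"] by simp
  qed
  have P0: "P n 0 = 0" for n
    using Pcoef[of 0 n] ip_zero_left[OF Lf[of 0] L2_phi f0] by (simp add: coef_def)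
  have tail: "P n t = 0" if n: "n > N" and t: "t \<ge> 0" for n t
  proof -
    define h where "h s = exp (- \<mu> n * s) * P n s" for s
    have "h t = h 0"
    proof (rule const_from_deriv[OF t])
      show "continuous_on {0..} h" unfolding h_def by (intro continuous_intros Pc)
      fix s :: real assume s: "s > 0"
      have "(h has_real_derivative (- \<mu> n * exp (- \<mu> n * s) * P n s + exp (- \<mu> n * s) * (\<mu> n * P n s + g s * (if n \<le> N then l n else 0)))) (at s)"
        unfolding h_def by (auto intro!: derivative_eq_intros Pd[OF s])
      then show "(h has_real_derivative 0) (at s)" using n by (simp add: algebra_simps)
    qed
    then show ?thesis using P0[of n] by (simp add: h_def)
  qed
  have gform: "g t = (\<Sum>j\<le>N. Cvec j * P j t)" if t: "t > 0" for t
  proof -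
    define G where "G x = f t x - cpoly (\<lambda>n. P n t) N x" for x
    have LG: "L2 G" unfolding G_def[abs_def] using Lf t by (intro L2_diff L2_cpoly) auto
    have cG: "coef G m = 0" for m
    proof -
      have "coef G m = coef (f t) m - ip (cpoly (\<lambda>n. P n t) N) (phi m)"
        unfolding G_def[abs_def] coef_def using Lf t by (intro ip_diff L2_cpoly L2_phi) auto
      also have "\<dots> = P m t - (if m \<le> N then P m t else 0)" using Pcoef t by (simp add: ip_cpoly_phi)
      also have "\<dots> = 0" using tail[of m t] t by auto
      finally show ?thesis .
    qed
    have "(\<lambda>m. (coef G m)^2) sums ip G G" by (rule parseval[OF LG])
    then have z: "ip G G = 0" using cG by (simp add: sums_iff)
    have cont: "continuous_on {0..1} G"
    proof -
      have "continuous_on {0..1} (\<lambda>x. e2 x t)" "continuous_on {0..1} (\<lambda>x. e1 x t)"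
        using s1 s2 t by (auto simp: is_solution_def)
      then show ?thesis unfolding G_def f_def by (intro continuous_intros cont_cpoly)
    qed
    have "G 0 = 0" by (rule cont_zero[OF cont z]) simp
    then show ?thesis by (simp add: G_def f_def g_def cpoly_def phi_0 mult.commute)
  qed
  define M where "M = ALC a l"
  have Pfin: "(P i has_real_derivative (\<Sum>j\<le>N. M i j * P j t)) (at t)" if t: "t > 0" and i: "i \<le> N" for i t
  proof -
    have "(\<Sum>j\<le>N. M i j * P j t) = (\<Sum>j\<le>N. Amat a i j * P j t) + l i * (\<Sum>j\<le>N. Cvec j * P j t)"
      by (simp add: M_def ALC_def distrib_right sum.distrib sum_distrib_left mult.assoc)
    also have "(\<Sum>j\<le>N. Amat a i j * P j t) = \<mu> i * P i t"
      using i by (simp add: Amat_def \<mu>_def if_distrib[of "\<lambda>y. y * _"] sum.delta cong: if_cong)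
    finally have e: "(\<Sum>j\<le>N. M i j * P j t) = \<mu> i * P i t + g t * l i" using gform[OF t] by simp
    show ?thesis unfolding e using Pd[OF t, of i] i by simp
  qed
  define c where "c = 2 * (\<Sum>i\<le>N. \<Sum>j\<le>N. \<bar>M i j\<bar>)"
  have fin: "P i t = 0" if i: "i \<le> N" and t: "t \<ge> 0" for i t
  proof -
    define U where "U s = nsq N (\<lambda>i. P i s)" for s
    define h where "h s = exp (- c * s) * U s" for s
    have "h t \<le> h 0"
    proof (rule nonincr[OF t])
      show "continuous_on {0..t} h" unfolding h_def U_def nsq_def
        by (intro continuous_intros continuous_on_subset[OF Pc]) auto
      fix s :: real assume s: "0 < s" "s < t"
      define U' where "U' = (\<Sum>i\<le>N. 2 * P i s * (\<Sum>j\<le>N. M i j * P j s))"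
      have Ud: "(U has_real_derivative U') (at s)"
        unfolding U_def nsq_def U'_def
        by (intro DERIV_sum) (auto intro!: derivative_eq_intros Pfin[OF s(1)])
      have "U' = 2 * quad N M (\<lambda>i. P i s)"
        unfolding U'_def quad_def by (simp add: sum_distrib_left mult.assoc mult.left_commute)
      also have "\<dots> \<le> c * U s" unfolding c_def U_def using quad_upper[of N M "\<lambda>i. P i s"] by simp
      finally have U'b: "U' \<le> c * U s" .
      have "(h has_real_derivative (- c * exp (- c * s) * U s + exp (- c * s) * U')) (at s)"
        unfolding h_def by (auto intro!: derivative_eq_intros Ud)
      moreover have "- c * exp (- c * s) * U s + exp (- c * s) * U' \<le> 0"
        using mult_left_mono[OF U'b, of "exp (- c * s)"] by (simp add: algebra_simps)
      ultimately show "(h has_real_derivative (- c * exp (- c * s) * U s + exp (- c * s) * U')) (at s) \<and>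
          - c * exp (- c * s) * U s + exp (- c * s) * U' \<le> 0" by blast
    qed
    moreover have "h 0 = 0" by (simp add: h_def U_def nsq_def P0)
    ultimately have "U t \<le> 0" by (simp add: h_def mult_le_0_iff)
    moreover have "(P i t)^2 \<le> U t" unfolding U_def nsq_def using i by (intro member_le_sum) auto
    ultimately have "(P i t)^2 \<le> 0" by linarith
    then show ?thesis by simp
  qed
  show ?thesis
  proof (intro allI impI)
    fix t :: real assume t: "t \<ge> 0"
    have "coef (f t) n = 0" for n
      using Pcoef[OF t, of n] tail[OF _ t, of n] fin[of n t] t by (cases "n \<le> N") auto
    then have "(\<lambda>n. 0) sums ip (f t) (f t)" using parseval[OF Lf[OF t]] by simp
    then have "ip (f t) (f t) = 0" by (simp add: sums_iff)
    then show "L2norm (\<lambda>x. e2 x t - e1 x t) = 0" by (simp add: L2norm_ip f_def[abs_def])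
  qed
qed

lemma indef_deriv:
  fixes h :: "real \<Rightarrow> real"
  assumes h: "continuous_on {0..} h" and t: "t > 0"
  shows "((\<lambda>t. integral {0..t} h) has_real_derivative h t) (at t)"
proof -
  have "((\<lambda>t. integral {0..t} h) has_real_derivative h t) (at t within {0..t+1})"
    by (rule integral_has_real_derivative) (use t in \<open>auto intro: continuous_on_subset[OF h]\<close>)
  moreover have "at t within {0..t+1} = at t"
    by (rule at_within_interior) (use t in simp)
  ultimately show ?thesis by simp
qed

lemma lam_mono: "n < m \<Longrightarrow> lam n < lam m"
  unfolding lam_def by (intro power_strict_mono mult_strict_right_mono) auto

lemma series_cs:
  fixes u v :: "nat \<Rightarrow> real"
  assumes u: "summable (\<lambda>n. (u n)^2)" and v: "summable (\<lambda>n. (v n)^2)" and uv: "summable (\<lambda>n. u n * v n)"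
  shows "(\<Sum>n. u n * v n)^2 \<le> (\<Sum>n. (u n)^2) * (\<Sum>n. (v n)^2)"
proof -
  have lim: "(\<lambda>K. (\<Sum>n<K. u n * v n)^2) \<longlonglongrightarrow> (\<Sum>n. u n * v n)^2"
    by (intro tendsto_power summable_LIMSEQ uv)
  have "(\<Sum>n<K. u n * v n)^2 \<le> (\<Sum>n. (u n)^2) * (\<Sum>n. (v n)^2)" for K
  proof -
    have "(\<Sum>n<K. u n * v n)^2 \<le> (\<Sum>n<K. (u n)^2) * (\<Sum>n<K. (v n)^2)" by (rule Cauchy_Schwarz_ineq_sum)
    also have "\<dots> \<le> (\<Sum>n. (u n)^2) * (\<Sum>n. (v n)^2)"
      by (intro mult_mono sum_le_suminf u v) (auto intro: sum_nonneg suminf_nonneg u v)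
    finally show ?thesis .
  qed
  then show ?thesis using lim by (intro LIMSEQ_le_const2) auto
qed

locale constr =
  fixes a \<delta> :: real and N :: nat and l :: "nat \<Rightarrow> real" and e0 :: "real \<Rightarrow> real"
  assumes \<delta>: "\<delta> > 0" and tailneg: "\<forall>n::nat. n > N \<longrightarrow> a - (real n * pi)^2 < - \<delta>" and Le0: "L2 e0"
begin

definition "\<mu> n = a - lam n"
definition "b n = coef e0 n"
definition "B2 = ip e0 e0"
definition "D = sqrt B2"

lemma mu_neg: "n > N \<Longrightarrow> \<mu> n < - \<delta>"
  using tailneg by (simp add: \<mu>_def lam_def)

lemma bsum: "(\<lambda>n. (b n)^2) sums B2"
  unfolding b_def B2_def by (rule parseval[OF Le0])

lemma B2_nonneg: "B2 \<ge> 0" unfolding B2_def by (rule ip_self_nonneg)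

lemma b_bound: "\<bar>b n\<bar> \<le> D"
proof -
  have "(b n)^2 \<le> (\<Sum>m\<le>n. (b m)^2)" by (intro member_le_sum) auto
  also have "\<dots> \<le> B2" unfolding b_def B2_def by (rule bessel[OF Le0])
  finally have "(b n)^2 \<le> B2" .
  then show ?thesis unfolding D_def by (simp add: real_le_rsqrt)
qed

lemma D_nonneg: "D \<ge> 0" unfolding D_def using B2_nonneg by simp

definition "dw m = (if m > N then sqrt 2 * b m else 0)"
definition "w t = dser dw \<mu> t"

lemma dw_bound: "\<bar>dw m\<bar> \<le> sqrt 2 * D"
  unfolding dw_def using b_bound[of m] by (auto simp: abs_mult)

lemma eser_ok_R: "n \<le> N \<Longrightarrow> eser_ok dw (\<lambda>m. \<mu> m - \<mu> n)"
proof unfold_locales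
  assume n: "n \<le> N"
  show "dw m = 0 \<or> \<mu> m - \<mu> n < 0" for m
    using lam_mono[of n m] n by (auto simp: dw_def \<mu>_def)
  show "summable (\<lambda>m. \<bar>dw m\<bar> / \<bar>\<mu> m - \<mu> n\<bar>)"
  proof (rule summable_bound)
    show "\<bar>\<bar>dw m\<bar> / \<bar>\<mu> m - \<mu> n\<bar>\<bar> \<le> sqrt 2 * D * (1 / \<bar>(real m * pi)^2 - lam n\<bar>)" for m
    proof -
      have "\<bar>\<mu> m - \<mu> n\<bar> = \<bar>(real m * pi)^2 - lam n\<bar>" by (simp add: \<mu>_def lam_def abs_minus_commute)
      then show ?thesis using dw_bound[of m] by (simp add: divide_right_mono)
    qed
    show "summable (\<lambda>m. sqrt 2 * D * (1 / \<bar>(real m * pi)^2 - lam n\<bar>))"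
      by (intro summable_mult summable_inv_sq)
  qed
  fix s :: real assume s: "s > 0"
  show "summable (\<lambda>m. \<bar>dw m\<bar> * exp ((\<mu> m - \<mu> n) * s))"
  proof (rule summable_bound)
    show "\<bar>\<bar>dw m\<bar> * exp ((\<mu> m - \<mu> n) * s)\<bar> \<le> sqrt 2 * D * exp ((lam n - (real m * pi)^2) * s)" for m
      using dw_bound[of m] by (simp add: \<mu>_def lam_def abs_mult mult_right_mono)
    show "summable (\<lambda>m. sqrt 2 * D * exp ((lam n - (real m * pi)^2) * s))"
      by (intro summable_mult summable_exp_sq s)
  qed
qed

lemma w_summable: "t > 0 \<Longrightarrow> summable (\<lambda>m. dw m * exp (\<mu> m * t))"
proof (rule summable_bound)
  assume t: "t > 0"
  show "\<bar>dw m * exp (\<mu> m * t)\<bar> \<le> sqrt 2 * D * exp ((a - (real m * pi)^2) * t)" for m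
    using dw_bound[of m] by (simp add: \<mu>_def lam_def abs_mult mult_right_mono)
  show "summable (\<lambda>m. sqrt 2 * D * exp ((a - (real m * pi)^2) * t))"
    by (intro summable_mult summable_exp_sq t)
qed

definition "R n t = eser dw (\<lambda>m. \<mu> m - \<mu> n) t"

lemma R_dser: "t > 0 \<Longrightarrow> dser dw (\<lambda>m. \<mu> m - \<mu> n) t = exp (- \<mu> n * t) * w t"
proof -
  assume t: "t > 0"
  have "dser dw (\<lambda>m. \<mu> m - \<mu> n) t = (\<Sum>m. exp (- \<mu> n * t) * (dw m * exp (\<mu> m * t)))"
    unfolding dser_def by (intro suminf_cong) (simp add: exp_add[symmetric] algebra_simps)
  also have "\<dots> = exp (- \<mu> n * t) * w t"
    unfolding w_def dser_def by (rule suminf_mult[OF w_summable[OF t]])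
  finally show ?thesis .
qed

definition "k n = Cvec n * l n"

definition "g t = (\<Sum>n\<le>N. Cvec n * exp (\<mu> n * t) * b n) + (\<Sum>n\<le>N. k n * exp (\<mu> n * t) * R n t)"

lemma R_cont: "n \<le> N \<Longrightarrow> continuous_on {0..} (R n)"
  unfolding R_def[abs_def] using eser_ok.eser_cont[OF eser_ok_R] by simp

lemma g_cont: "continuous_on {0..} g"
  unfolding g_def[abs_def] by (intro continuous_intros R_cont) auto

definition "z = (SOME z. continuous_on {0..} z \<and> (\<forall>t\<ge>0. z t = g t + Kop N k \<mu> z t))"

lemma z: "continuous_on {0..} z" "\<And>t. t \<ge> 0 \<Longrightarrow> z t = g t + Kop N k \<mu> z t"
proof -
  have "\<exists>z. continuous_on {0..} z \<and> (\<forall>t\<ge>0. z t = g t + Kop N k \<mu> z t)" by (rule volterra[OF g_cont])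
  then have "continuous_on {0..} z \<and> (\<forall>t\<ge>0. z t = g t + Kop N k \<mu> z t)"
    unfolding z_def by (rule someI_ex)
  then show "continuous_on {0..} z" "\<And>t. t \<ge> 0 \<Longrightarrow> z t = g t + Kop N k \<mu> z t" by auto
qed

definition "Z n t = integral {0..t} (\<lambda>s. exp (- \<mu> n * s) * z s)"

definition "c n t = exp (\<mu> n * t) * (b n + (if n \<le> N then l n * (R n t + Z n t) else 0))"

definition "y t = w t + z t"

lemma c0: "c n 0 = b n"
  by (simp add: c_def R_def eser_ok.eser_0[OF eser_ok_R] Z_def)

lemma Z_cont: "continuous_on {0..} (Z n)"
  unfolding Z_def[abs_def] by (intro indef_cont_half continuous_intros z(1))

lemma c_cont: "continuous_on {0..} (c n)"
proof (cases "n \<le> N")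
  case True
  then show ?thesis unfolding c_def[abs_def] by (simp, intro continuous_intros R_cont Z_cont)
next
  case False
  then show ?thesis unfolding c_def[abs_def] by (simp, intro continuous_intros)
qed

lemma c_deriv:
  assumes t: "t > 0"
  shows "(c n has_real_derivative \<mu> n * c n t + (if n \<le> N then l n else 0) * y t) (at t)"
proof (cases "n \<le> N")
  case True
  have Rd: "(R n has_real_derivative exp (- \<mu> n * t) * w t) (at t)"
    unfolding R_def[abs_def] using eser_ok.eser_deriv[OF eser_ok_R[OF True] t] R_dser[OF t] by simp
  have Zd: "(Z n has_real_derivative exp (- \<mu> n * t) * z t) (at t)"
    unfolding Z_def[abs_def] by (rule indef_deriv[OF _ t]) (intro continuous_intros z(1))
  have ceq: "c n = (\<lambda>t. exp (\<mu> n * t) * (b n + l n * (R n t + Z n t)))"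
    using True by (simp add: c_def fun_eq_iff)
  have "(c n has_real_derivative \<mu> n * exp (\<mu> n * t) * (b n + l n * (R n t + Z n t))
          + exp (\<mu> n * t) * (l n * (exp (- \<mu> n * t) * w t + exp (- \<mu> n * t) * z t))) (at t)"
    unfolding ceq
    by (rule derivative_eq_intros DERIV_mult DERIV_add DERIV_cmult Rd Zd DERIV_const
        | (rule DERIV_exp, rule DERIV_cmult_Id) | simp)+
  moreover have "\<mu> n * exp (\<mu> n * t) * (b n + l n * (R n t + Z n t))
          + exp (\<mu> n * t) * (l n * (exp (- \<mu> n * t) * w t + exp (- \<mu> n * t) * z t))
        = \<mu> n * c n t + (if n \<le> N then l n else 0) * y t"
    using True by (simp add: c_def y_def algebra_simps exp_add[symmetric])
  ultimately show ?thesis by simp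
next
  case False
  have "(c n has_real_derivative \<mu> n * exp (\<mu> n * t) * b n) (at t)"
    unfolding c_def[abs_def] using False by (simp, intro derivative_eq_intros refl) auto
  then show ?thesis using False by (simp add: c_def mult.assoc)
qed

lemma c_tail: "n > N \<Longrightarrow> c n t = exp (\<mu> n * t) * b n"
  by (simp add: c_def)

lemma c_tail_bound: "n > N \<Longrightarrow> t \<ge> 0 \<Longrightarrow> \<bar>c n t\<bar> \<le> \<bar>b n\<bar>"
proof -
  assume n: "n > N" and t: "t \<ge> 0"
  have "\<mu> n * t \<le> 0" using mu_neg[OF n] \<delta> t by (simp add: mult_nonpos_nonneg)
  then have "exp (\<mu> n * t) \<le> 1" by simp
  then show ?thesis using n by (simp add: c_tail abs_mult mult_left_le_one_le)
qed

lemma c_summable: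
  assumes t: "t > 0"
  shows "summable (\<lambda>n. \<bar>c n t\<bar>)"
proof (rule summable_bound)
  show "\<bar>\<bar>c n t\<bar>\<bar> \<le> (if n \<le> N then \<bar>c n t\<bar> else 0) + D * exp ((a - (real n * pi)^2) * t)" for n
  proof (cases "n \<le> N")
    case False
    then have "\<bar>c n t\<bar> = exp (\<mu> n * t) * \<bar>b n\<bar>" by (simp add: c_tail abs_mult)
    also have "\<dots> \<le> exp (\<mu> n * t) * D" by (intro mult_left_mono b_bound) auto
    finally show ?thesis using False by (simp add: \<mu>_def lam_def mult.commute)
  qed (simp add: D_nonneg)
  show "summable (\<lambda>n. (if n \<le> N then \<bar>c n t\<bar> else 0) + D * exp ((a - (real n * pi)^2) * t))"
  proof (intro summable_add summable_mult summable_exp_sq t)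
    show "summable (\<lambda>n. if n \<le> N then \<bar>c n t\<bar> else 0)"
      by (rule summable_finite[of "{..N}"]) auto
  qed
qed

lemma fin_id: "t \<ge> 0 \<Longrightarrow> z t = (\<Sum>j\<le>N. Cvec j * c j t)"
proof -
  assume t: "t \<ge> 0"
  have "(\<Sum>j\<le>N. Cvec j * c j t) = (\<Sum>j\<le>N. Cvec j * exp (\<mu> j * t) * b j) +
         (\<Sum>j\<le>N. k j * exp (\<mu> j * t) * R j t) + (\<Sum>j\<le>N. k j * exp (\<mu> j * t) * Z j t)"
    by (simp add: c_def k_def sum.distrib[symmetric] algebra_simps)
  also have "(\<Sum>j\<le>N. k j * exp (\<mu> j * t) * Z j t) = Kop N k \<mu> z t"
    by (simp add: Kop_def Z_def)
  finally show ?thesis using z(2)[OF t] by (simp add: g_def)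
qed

lemma y_series:
  assumes t: "t > 0"
  shows "(\<Sum>n. c n t * phi n 0) = y t"
proof -
  have split: "c n t * phi n 0 = (if n \<le> N then Cvec n * c n t else 0) + dw n * exp (\<mu> n * t)" for n
    by (cases "n \<le> N") (auto simp: dw_def c_tail phi_0 Cvec_def)
  have s1: "summable (\<lambda>n. if n \<le> N then Cvec n * c n t else 0)" by (rule summable_finite[of "{..N}"]) auto
  have "(\<Sum>n. c n t * phi n 0) = (\<Sum>n. if n \<le> N then Cvec n * c n t else 0) + (\<Sum>n. dw n * exp (\<mu> n * t))"
    unfolding split by (rule suminf_add[OF s1 w_summable[OF t], symmetric])
  also have "(\<Sum>n. if n \<le> N then Cvec n * c n t else 0) = (\<Sum>n\<le>N. Cvec n * c n t)"
    by (subst suminf_finite[of "{..N}"]) auto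
  also have "\<dots> = z t" using fin_id[of t] t by simp
  finally show ?thesis by (simp add: y_def w_def dser_def)
qed

end

context constr
begin

definition "E x t = (if t \<le> 0 then e0 x else cser (\<lambda>n. c n t) x)"

lemma E_pos: "t > 0 \<Longrightarrow> (\<lambda>x. E x t) = cser (\<lambda>n. c n t)"
  by (simp add: E_def fun_eq_iff)

lemma E_0: "(\<lambda>x. E x 0) = e0"
  by (simp add: E_def fun_eq_iff)

lemma E_L2: "t \<ge> 0 \<Longrightarrow> L2 (\<lambda>x. E x t)"
proof -
  assume t: "t \<ge> 0"
  show ?thesis
  proof (cases "t = 0")
    case True then show ?thesis using E_0 Le0 by simp
  next
    case False then have "t > 0" using t by simp
    then show ?thesis using E_pos L2_cser c_summable by simp
  qed
qed

lemma E_coef: "t \<ge> 0 \<Longrightarrow> coef (\<lambda>x. E x t) n = c n t"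
proof -
  assume t: "t \<ge> 0"
  show ?thesis
  proof (cases "t = 0")
    case True then show ?thesis using E_0 c0 by (simp add: b_def)
  next
    case False then have "t > 0" using t by simp
    then show ?thesis using E_pos coef_cser c_summable by simp
  qed
qed

lemma E_diff_sums:
  assumes t: "t \<ge> 0" and t0: "t0 \<ge> 0"
  shows "(\<lambda>n. (c n t - c n t0)^2) sums ip (\<lambda>x. E x t - E x t0) (\<lambda>x. E x t - E x t0)"
proof -
  have L: "L2 (\<lambda>x. E x t - E x t0)" by (intro L2_diff E_L2 t t0)
  have "coef (\<lambda>x. E x t - E x t0) n = c n t - c n t0" for n
    unfolding coef_def using E_coef[OF t] E_coef[OF t0] by (simp add: ip_diff E_L2 t t0 L2_phi coef_def)
  then show ?thesis using parseval[OF L] by simp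
qed

lemma sqsum_cont:
  assumes t0: "t0 \<ge> 0"
  shows "continuous_on {0..} (\<lambda>t. \<Sum>n. (c n t - c n t0)^2)"
proof (rule cont_halfline)
  fix T :: real assume T: "T \<ge> 0"
  let ?T = "max T t0"
  have "\<forall>n. \<exists>C. \<forall>t\<in>{0..?T}. \<bar>c n t\<bar> \<le> C"
    using cont_bound[OF continuous_on_subset[OF c_cont]] by (metis atLeastAtMost_iff atLeast_iff subsetI)
  then obtain C where C: "\<And>n t. t \<in> {0..?T} \<Longrightarrow> \<bar>c n t\<bar> \<le> C n" by metis
  show "continuous_on {0..T} (\<lambda>t. \<Sum>n. (c n t - c n t0)^2)"
  proof (rule series_cont)
    show "continuous_on {0..T} (\<lambda>t. (c n t - c n t0)^2)" for n
      by (intro continuous_intros continuous_on_subset[OF c_cont]) auto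
    show "\<bar>(c n t - c n t0)^2\<bar> \<le> (if n \<le> N then (2 * C n)^2 else 0) + 4 * (b n)^2" if t: "t \<in> {0..T}" for n t
    proof (cases "n \<le> N")
      case True
      have "t \<in> {0..?T}" "t0 \<in> {0..?T}" using t t0 by auto
      then have "\<bar>c n t\<bar> \<le> C n" "\<bar>c n t0\<bar> \<le> C n" using C by auto
      then have "\<bar>c n t - c n t0\<bar> \<le> 2 * C n" by linarith
      then have "\<bar>c n t - c n t0\<bar>^2 \<le> (2 * C n)^2" by (intro power_mono) auto
      moreover have "0 \<le> 4 * (b n)^2" by simp
      ultimately have "(c n t - c n t0)^2 \<le> (2 * C n)^2 + 4 * (b n)^2"
        using power2_abs[of "c n t - c n t0"] by linarith
      then show ?thesis using True by simp
    next
      case False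
      have "\<bar>c n t - c n t0\<bar> \<le> 2 * \<bar>b n\<bar>" using c_tail_bound[of n t] c_tail_bound[of n t0] False t t0 by auto
      then have "\<bar>c n t - c n t0\<bar>^2 \<le> (2 * \<bar>b n\<bar>)^2" by (intro power_mono) auto
      then show ?thesis using False by (simp add: power_mult_distrib)
    qed
    show "summable (\<lambda>n. (if n \<le> N then (2 * C n)^2 else 0) + 4 * (b n)^2)"
      by (intro summable_add summable_mult sums_summable[OF bsum] summable_finite[of "{..N}"]) auto
  qed
qed

lemma E_L2_cont:
  assumes t0: "t0 \<ge> 0"
  shows "((\<lambda>t. L2norm (\<lambda>x. E x t - E x t0)) \<longlongrightarrow> 0) (at t0 within {0..})"
proof -
  let ?F = "\<lambda>t. \<Sum>n. (c n t - c n t0)^2"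
  have "(?F \<longlongrightarrow> ?F t0) (at t0 within {0..})"
    using sqsum_cont[OF t0] t0 unfolding continuous_on_def by blast
  then have "((\<lambda>t. sqrt (?F t)) \<longlongrightarrow> sqrt (?F t0)) (at t0 within {0..})" by (rule tendsto_real_sqrt)
  then have lim: "((\<lambda>t. sqrt (?F t)) \<longlongrightarrow> 0) (at t0 within {0..})" by simp
  have "\<forall>\<^sub>F t in at t0 within {0..}. sqrt (?F t) = L2norm (\<lambda>x. E x t - E x t0)"
    using ev_within_half
  proof (rule eventually_mono)
    fix t :: real assume "t \<in> {0..}"
    then show "sqrt (?F t) = L2norm (\<lambda>x. E x t - E x t0)"
      using E_diff_sums[of t t0] t0 by (simp add: L2norm_ip sums_iff)
  qed
  then show ?thesis using lim by (rule Lim_transform_eventually[rotated])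
qed

lemma E_sol: "is_solution a N l e0 E"
  unfolding is_solution_def
proof (intro conjI allI impI)
  show "L2 (\<lambda>x. E x t)" if "t \<ge> 0" for t using E_L2 that .
  show "((\<lambda>t. L2norm (\<lambda>x. E x t - E x t0)) \<longlongrightarrow> 0) (at t0 within {0..})" if "t0 \<ge> 0" for t0
    using E_L2_cont that .
  show "L2norm (\<lambda>x. E x 0 - e0 x) = 0" by (simp add: E_def L2norm_def)
  show "continuous_on {0..1} (\<lambda>x. E x t)" if "t > 0" for t
    unfolding E_pos[OF that] by (rule cser_cont[OF c_summable[OF that]])
  fix n :: nat and t :: real assume t: "t > 0"
  have E0: "E 0 t = y t" using E_pos[OF t] y_series[OF t] by (simp add: cser_def fun_eq_iff)
  have "(c n has_real_derivative \<mu> n * c n t + (if n \<le> N then l n else 0) * y t) (at t)"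
    by (rule c_deriv[OF t])
  then have "((\<lambda>s. integral {0..1} (\<lambda>x. E x s * phi n x)) has_real_derivative \<mu> n * c n t + (if n \<le> N then l n else 0) * y t) (at t)"
  proof (rule has_field_derivative_transform_within_open)
    show "open {(0::real)<..}" by simp
    show "t \<in> {0<..}" using t by simp
    fix s :: real assume "s \<in> {0<..}"
    then show "c n s = integral {0..1} (\<lambda>x. E x s * phi n x)"
      using E_coef[of s n] by (simp add: coef_def ip_def)
  qed
  moreover have "\<mu> n * c n t + (if n \<le> N then l n else 0) * y t =
      (a - lam n) * integral {0..1} (\<lambda>x. E x t * phi n x) + E 0 t * integral {0..1} (\<lambda>x. Lfun N l x * phi n x)"
    using E_coef[of t n] t coef_Lfun[of N l n] E0 by (simp add: coef_def ip_def \<mu>_def mult.commute)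
  ultimately show "((\<lambda>s. integral {0..1} (\<lambda>x. E x s * phi n x)) has_real_derivative
         (a - lam n) * integral {0..1} (\<lambda>x. E x t * phi n x) + E 0 t * integral {0..1} (\<lambda>x. Lfun N l x * phi n x)) (at t)"
    by simp
qed

end

definition dPhi :: "nat \<Rightarrow> nat \<Rightarrow> real" where "dPhi N m = (if m > N then 1 else 0)"
definition nuPhi :: "real \<Rightarrow> real \<Rightarrow> nat \<Rightarrow> real" where "nuPhi a \<delta> m = 2 * (\<delta> + (a - lam m))"
definition PhiM :: "real \<Rightarrow> real \<Rightarrow> nat \<Rightarrow> real" where
  "PhiM a \<delta> N = (\<Sum>m. \<bar>dPhi N m\<bar> / \<bar>nuPhi a \<delta> m\<bar>)"

context constr
begin

lemma eser_ok_Phi: "eser_ok (dPhi N) (nuPhi a \<delta>)"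
proof unfold_locales
  show "dPhi N m = 0 \<or> nuPhi a \<delta> m < 0" for m
    using mu_neg[of m] by (auto simp: dPhi_def nuPhi_def \<mu>_def)
  show "summable (\<lambda>m. \<bar>dPhi N m\<bar> / \<bar>nuPhi a \<delta> m\<bar>)"
  proof (rule summable_bound)
    show "\<bar>\<bar>dPhi N m\<bar> / \<bar>nuPhi a \<delta> m\<bar>\<bar> \<le> 1/2 * (1 / \<bar>(real m * pi)^2 - (\<delta> + a)\<bar>)" for m
    proof -
      have eq: "nuPhi a \<delta> m = 2 * ((\<delta> + a) - (real m * pi)^2)" by (simp add: nuPhi_def lam_def algebra_simps)
      have "\<bar>nuPhi a \<delta> m\<bar> = 2 * \<bar>(\<delta> + a) - (real m * pi)^2\<bar>" unfolding eq abs_mult by simp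
      then have "\<bar>nuPhi a \<delta> m\<bar> = 2 * \<bar>(real m * pi)^2 - (\<delta> + a)\<bar>" by (simp add: abs_minus_commute)
      then show ?thesis by (simp add: dPhi_def)
    qed
    show "summable (\<lambda>m. 1/2 * (1 / \<bar>(real m * pi)^2 - (\<delta> + a)\<bar>))"
      by (intro summable_mult summable_inv_sq)
  qed
  fix s :: real assume s: "s > 0"
  show "summable (\<lambda>m. \<bar>dPhi N m\<bar> * exp (nuPhi a \<delta> m * s))"
  proof (rule summable_bound)
    show "\<bar>\<bar>dPhi N m\<bar> * exp (nuPhi a \<delta> m * s)\<bar> \<le> exp ((\<delta> + a - (real m * pi)^2) * (2 * s))" for m
      by (simp add: dPhi_def nuPhi_def lam_def algebra_simps)
    show "summable (\<lambda>m. exp ((\<delta> + a - (real m * pi)^2) * (2 * s)))"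
      by (intro summable_exp_sq) (use s in simp)
  qed
qed

lemma w_bound:
  assumes t: "t > 0"
  shows "exp (2 * \<delta> * t) * (w t)^2 \<le> 2 * B2 * dser (dPhi N) (nuPhi a \<delta>) t"
proof -
  define v where "v m = (if m > N then exp (\<mu> m * t) else 0)" for m
  have uv: "dw m * exp (\<mu> m * t) = dw m * v m" for m by (simp add: dw_def v_def)
  have su: "summable (\<lambda>m. (dw m)^2)"
  proof (rule summable_bound)
    show "\<bar>(dw m)^2\<bar> \<le> 2 * (b m)^2" for m by (simp add: dw_def power_mult_distrib)
    show "summable (\<lambda>m. 2 * (b m)^2)" by (intro summable_mult sums_summable[OF bsum])
  qed
  have sv: "summable (\<lambda>m. (v m)^2)"
  proof (rule summable_bound)
    show "\<bar>(v m)^2\<bar> \<le> exp ((a - (real m * pi)^2) * (2 * t))" for m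
      by (simp add: v_def \<mu>_def lam_def power2_eq_square exp_add[symmetric] algebra_simps)
    show "summable (\<lambda>m. exp ((a - (real m * pi)^2) * (2 * t)))" by (intro summable_exp_sq) (use t in simp)
  qed
  have suv: "summable (\<lambda>m. dw m * v m)" using w_summable[OF t] by (simp add: uv)
  have "(w t)^2 = (\<Sum>m. dw m * v m)^2" by (simp add: w_def dser_def uv)
  also have "\<dots> \<le> (\<Sum>m. (dw m)^2) * (\<Sum>m. (v m)^2)" by (rule series_cs[OF su sv suv])
  also have "(\<Sum>m. (dw m)^2) \<le> 2 * B2"
  proof -
    have "(\<Sum>m. (dw m)^2) \<le> (\<Sum>m. 2 * (b m)^2)"
    proof (rule suminf_le[OF _ su])
      show "(dw m)^2 \<le> 2 * (b m)^2" for m by (simp add: dw_def power_mult_distrib)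
      show "summable (\<lambda>m. 2 * (b m)^2)" by (intro summable_mult sums_summable[OF bsum])
    qed
    also have "\<dots> = 2 * B2" using bsum by (simp add: suminf_mult sums_summable sums_unique[symmetric])
    finally show ?thesis .
  qed
  then have "(\<Sum>m. (dw m)^2) * (\<Sum>m. (v m)^2) \<le> 2 * B2 * (\<Sum>m. (v m)^2)"
    by (intro mult_right_mono suminf_nonneg sv) auto
  finally have A: "(w t)^2 \<le> 2 * B2 * (\<Sum>m. (v m)^2)" .
  have "exp (2 * \<delta> * t) * (\<Sum>m. (v m)^2) = (\<Sum>m. exp (2 * \<delta> * t) * (v m)^2)"
    by (rule suminf_mult[OF sv, symmetric])
  also have "\<dots> = dser (dPhi N) (nuPhi a \<delta>) t"
    unfolding dser_def
    by (intro suminf_cong) (simp add: v_def dPhi_def nuPhi_def \<mu>_def power2_eq_square exp_add[symmetric] algebra_simps)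
  finally have B: "exp (2 * \<delta> * t) * (\<Sum>m. (v m)^2) = dser (dPhi N) (nuPhi a \<delta>) t" .
  have "exp (2 * \<delta> * t) * (w t)^2 \<le> exp (2 * \<delta> * t) * (2 * B2 * (\<Sum>m. (v m)^2))"
    using A by (intro mult_left_mono) auto
  also have "\<dots> = 2 * B2 * dser (dPhi N) (nuPhi a \<delta>) t" using B by (simp add: algebra_simps)
  finally show ?thesis .
qed

lemma decay:
  fixes Q :: "nat \<Rightarrow> nat \<Rightarrow> real" and K :: real
  assumes KP: "\<forall>p w \<Phi> \<phi>' \<Phi>m W.
     (\<forall>i\<le>N. continuous_on {0..} (p i)) \<and>
     (\<forall>t>0. \<forall>i\<le>N. (p i has_real_derivative (\<Sum>j\<le>N. ALC a l i j * p j t) + l i * w t) (at t)) \<and>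
     continuous_on {0..} \<Phi> \<and> \<Phi> 0 = 0 \<and> (\<forall>t\<ge>0. \<Phi> t \<le> \<Phi>m) \<and>
     (\<forall>t>0. (\<Phi> has_real_derivative \<phi>' t) (at t)) \<and>
     W \<ge> 0 \<and> (\<forall>t>0. exp (2 * \<delta> * t) * (w t)^2 \<le> W * \<phi>' t)
     \<longrightarrow> (\<forall>t\<ge>0. nsq N (\<lambda>i. p i t) \<le> exp (- 2 * \<delta> * t) * K * (nsq N (\<lambda>i. p i 0) + W * \<Phi>m))"
    and K: "K > 0"
  shows "\<forall>t\<ge>0. ip (\<lambda>x. E x t) (\<lambda>x. E x t) \<le> exp (- 2 * \<delta> * t) * (K * (1 + 2 * PhiM a \<delta> N) + 1) * B2"
proof (intro allI impI)
  fix t :: real assume t: "t \<ge> 0"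
  let ?\<Phi> = "eser (dPhi N) (nuPhi a \<delta>)"
  let ?\<phi> = "dser (dPhi N) (nuPhi a \<delta>)"
  have cond: "(\<forall>i\<le>N. continuous_on {0..} (c i)) \<and>
     (\<forall>t>0. \<forall>i\<le>N. (c i has_real_derivative (\<Sum>j\<le>N. ALC a l i j * c j t) + l i * w t) (at t)) \<and>
     continuous_on {0..} ?\<Phi> \<and> ?\<Phi> 0 = 0 \<and> (\<forall>t\<ge>0. ?\<Phi> t \<le> PhiM a \<delta> N) \<and>
     (\<forall>t>0. (?\<Phi> has_real_derivative ?\<phi> t) (at t)) \<and>
     2 * B2 \<ge> 0 \<and> (\<forall>t>0. exp (2 * \<delta> * t) * (w t)^2 \<le> 2 * B2 * ?\<phi> t)"
  proof (intro conjI allI impI)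
    show "continuous_on {0..} (c i)" for i by (rule c_cont)
    fix s :: real and i :: nat assume s: "s > 0" and i: "i \<le> N"
    have "(\<Sum>j\<le>N. ALC a l i j * c j s) = (\<Sum>j\<le>N. Amat a i j * c j s) + l i * (\<Sum>j\<le>N. Cvec j * c j s)"
      by (simp add: ALC_def distrib_right sum.distrib sum_distrib_left mult.assoc)
    also have "(\<Sum>j\<le>N. Amat a i j * c j s) = \<mu> i * c i s"
      using i by (simp add: Amat_def \<mu>_def if_distrib[of "\<lambda>y. y * _"] sum.delta cong: if_cong)
    finally have e: "(\<Sum>j\<le>N. ALC a l i j * c j s) + l i * w s = \<mu> i * c i s + l i * y s"
      using fin_id[of s] s by (simp add: y_def algebra_simps)
    show "(c i has_real_derivative (\<Sum>j\<le>N. ALC a l i j * c j s) + l i * w s) (at s)"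
      unfolding e using c_deriv[OF s, of i] i by simp
  next
    show "continuous_on {0..} ?\<Phi>" by (rule eser_ok.eser_cont[OF eser_ok_Phi])
    show "?\<Phi> 0 = 0" by (rule eser_ok.eser_0[OF eser_ok_Phi])
    fix s :: real assume s: "s \<ge> 0"
    show "?\<Phi> s \<le> PhiM a \<delta> N"
      using eser_ok.eser_bound[OF eser_ok_Phi s] by (simp add: PhiM_def)
  next
    fix s :: real assume s: "s > 0"
    show "(?\<Phi> has_real_derivative ?\<phi> s) (at s)" by (rule eser_ok.eser_deriv[OF eser_ok_Phi s])
    show "exp (2 * \<delta> * s) * (w s)^2 \<le> 2 * B2 * ?\<phi> s" by (rule w_bound[OF s])
  next
    show "2 * B2 \<ge> 0" using B2_nonneg by simp
  qed
  have ly: "nsq N (\<lambda>i. c i t) \<le> exp (- 2 * \<delta> * t) * K * (nsq N (\<lambda>i. c i 0) + 2 * B2 * PhiM a \<delta> N)"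
    using KP cond t by blast
  have n0: "nsq N (\<lambda>i. c i 0) \<le> B2"
    unfolding nsq_def c0 b_def B2_def by (rule bessel[OF Le0])
  have Pm: "PhiM a \<delta> N \<ge> 0" unfolding PhiM_def
    by (intro suminf_nonneg eser_ok.sum1[OF eser_ok_Phi]) auto
  have fin: "nsq N (\<lambda>i. c i t) \<le> exp (- 2 * \<delta> * t) * K * (1 + 2 * PhiM a \<delta> N) * B2"
  proof -
    have "K * (nsq N (\<lambda>i. c i 0) + 2 * B2 * PhiM a \<delta> N) \<le> K * (B2 + 2 * B2 * PhiM a \<delta> N)"
      using n0 K by (intro mult_left_mono) auto
    then have "exp (- 2 * \<delta> * t) * K * (nsq N (\<lambda>i. c i 0) + 2 * B2 * PhiM a \<delta> N) \<le> exp (- 2 * \<delta> * t) * (K * (B2 + 2 * B2 * PhiM a \<delta> N))"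
      by (simp add: mult.assoc)
    then show ?thesis using ly by (simp add: algebra_simps)
  qed
  have sE: "(\<lambda>n. (c n t)^2) sums ip (\<lambda>x. E x t) (\<lambda>x. E x t)"
    using parseval[OF E_L2[OF t]] E_coef[OF t] by simp
  have s1: "summable (\<lambda>n. if n \<le> N then (c n t)^2 else 0)" by (rule summable_finite[of "{..N}"]) auto
  have s2: "summable (\<lambda>n. if n \<le> N then 0 else (c n t)^2)"
  proof (rule summable_bound[of _ "\<lambda>n. (b n)^2"])
    fix n show "\<bar>if n \<le> N then 0 else (c n t)^2\<bar> \<le> (b n)^2"
      using c_tail_bound[of n t] t by (auto intro: power_mono simp: abs_le_square_iff)
  qed (rule sums_summable[OF bsum])
  have "ip (\<lambda>x. E x t) (\<lambda>x. E x t) = (\<Sum>n. (if n \<le> N then (c n t)^2 else 0) + (if n \<le> N then 0 else (c n t)^2))"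
    using sums_unique[OF sE] by (simp add: if_distrib cong: if_cong)
  also have "\<dots> = (\<Sum>n. if n \<le> N then (c n t)^2 else 0) + (\<Sum>n. if n \<le> N then 0 else (c n t)^2)"
    by (rule suminf_add[OF s1 s2, symmetric])
  also have "(\<Sum>n. if n \<le> N then (c n t)^2 else 0) = nsq N (\<lambda>i. c i t)"
    unfolding nsq_def by (subst suminf_finite[of "{..N}"]) auto
  also have "(\<Sum>n. if n \<le> N then 0 else (c n t)^2) \<le> (\<Sum>n. exp (- 2 * \<delta> * t) * (b n)^2)"
  proof (rule suminf_le[OF _ s2])
    fix n
    show "(if n \<le> N then 0 else (c n t)^2) \<le> exp (- 2 * \<delta> * t) * (b n)^2"
    proof (cases "n \<le> N")
      case False
      then have "\<mu> n * t \<le> - \<delta> * t" using mu_neg[of n] t by (intro mult_right_mono) auto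
      then have "exp (\<mu> n * t) ^ 2 \<le> exp (- \<delta> * t) ^ 2" by (intro power_mono) auto
      then have "exp (\<mu> n * t) ^ 2 * (b n)^2 \<le> exp (- \<delta> * t) ^ 2 * (b n)^2" by (intro mult_right_mono) auto
      then show ?thesis using False
        by (simp add: c_tail power_mult_distrib exp_of_nat_mult[symmetric] power2_eq_square exp_add[symmetric] algebra_simps)
    qed simp
    show "summable (\<lambda>n. exp (- 2 * \<delta> * t) * (b n)^2)" by (intro summable_mult sums_summable[OF bsum])
  qed
  also have "(\<Sum>n. exp (- 2 * \<delta> * t) * (b n)^2) = exp (- 2 * \<delta> * t) * B2"
    using bsum by (simp add: suminf_mult sums_summable sums_unique[symmetric])
  finally show "ip (\<lambda>x. E x t) (\<lambda>x. E x t) \<le> exp (- 2 * \<delta> * t) * (K * (1 + 2 * PhiM a \<delta> N) + 1) * B2"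
    using fin by (simp add: algebra_simps)
qed

end

theorem proposition2:
  fixes a \<delta> :: real and N :: nat and l :: "nat \<Rightarrow> real"
  assumes "\<delta> > 0"
    and "\<forall>n::nat. n > N \<longrightarrow> a - (real n * pi)^2 < - \<delta>"
    and "\<exists>Q. pos_def N Q \<and>
           mat_less N (\<lambda>i j. mmul N Q (ALC a l) i j + mmul N (transp_mat (ALC a l)) Q i j)
                      (\<lambda>i j. - 2 * \<delta> * Q i j)"
  shows "\<exists>M2 > 0. \<forall>e0. L2 e0 \<longrightarrow>
           (\<exists>e. is_solution a N l e0 e \<and>
                (\<forall>e'. is_solution a N l e0 e' \<longrightarrow> (\<forall>t\<ge>0. L2norm (\<lambda>x. e' x t - e x t) = 0)) \<and>
                (\<forall>t\<ge>0. L2norm (\<lambda>x. e x t) \<le> M2 * exp (- \<delta> * t) * L2norm e0))"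
proof -
  obtain Q where Q: "pos_def N Q"
    and S: "mat_less N (\<lambda>i j. mmul N Q (ALC a l) i j + mmul N (transp_mat (ALC a l)) Q i j) (\<lambda>i j. - 2 * \<delta> * Q i j)"
    using assms(3) by blast
  obtain K where K: "K > 0" and KP: "\<forall>p w \<Phi> \<phi>' \<Phi>m W.
     (\<forall>i\<le>N. continuous_on {0..} (p i)) \<and>
     (\<forall>t>0. \<forall>i\<le>N. (p i has_real_derivative (\<Sum>j\<le>N. ALC a l i j * p j t) + l i * w t) (at t)) \<and>
     continuous_on {0..} \<Phi> \<and> \<Phi> 0 = 0 \<and> (\<forall>t\<ge>0. \<Phi> t \<le> \<Phi>m) \<and>
     (\<forall>t>0. (\<Phi> has_real_derivative \<phi>' t) (at t)) \<and>
     W \<ge> 0 \<and> (\<forall>t>0. exp (2 * \<delta> * t) * (w t)^2 \<le> W * \<phi>' t)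
     \<longrightarrow> (\<forall>t\<ge>0. nsq N (\<lambda>i. p i t) \<le> exp (- 2 * \<delta> * t) * K * (nsq N (\<lambda>i. p i 0) + W * \<Phi>m))"
    using lyapunov[OF Q S, of l] by blast
  define C2 where "C2 = K * (1 + 2 * \<bar>PhiM a \<delta> N\<bar>) + 1"
  have C2: "C2 > 0" unfolding C2_def using K by (simp add: add_pos_nonneg)
  define M2 where "M2 = sqrt C2"
  have M2: "M2 > 0" unfolding M2_def using C2 by simp
  show ?thesis
  proof (intro exI[of _ M2] conjI M2 allI impI)
    fix e0 :: "real \<Rightarrow> real" assume Le0: "L2 e0"
    interpret C: constr a \<delta> N l e0
      by unfold_locales (use assms(1,2) Le0 in auto)
    show "\<exists>e. is_solution a N l e0 e \<and>
                (\<forall>e'. is_solution a N l e0 e' \<longrightarrow> (\<forall>t\<ge>0. L2norm (\<lambda>x. e' x t - e x t) = 0)) \<and>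
                (\<forall>t\<ge>0. L2norm (\<lambda>x. e x t) \<le> M2 * exp (- \<delta> * t) * L2norm e0)"
    proof (intro exI[of _ C.E] conjI allI impI)
      show "is_solution a N l e0 C.E" by (rule C.E_sol)
      fix e' assume s': "is_solution a N l e0 e'"
      show "\<And>t. t \<ge> 0 \<Longrightarrow> L2norm (\<lambda>x. e' x t - C.E x t) = 0"
        using uniqueness[OF C.E_sol s' Le0] by blast
    next
      fix t :: real assume t: "t \<ge> 0"
      have ipb: "ip (\<lambda>x. C.E x t) (\<lambda>x. C.E x t) \<le> exp (- 2 * \<delta> * t) * (K * (1 + 2 * PhiM a \<delta> N) + 1) * C.B2"
        using C.decay[OF KP K] t by blast
      also have "\<dots> \<le> exp (- 2 * \<delta> * t) * C2 * C.B2"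
      proof -
        have "K * (1 + 2 * PhiM a \<delta> N) + 1 \<le> C2" unfolding C2_def using K by (intro add_right_mono mult_left_mono) auto
        then show ?thesis using C.B2_nonneg by (intro mult_right_mono mult_left_mono) auto
      qed
      finally have ipb2: "ip (\<lambda>x. C.E x t) (\<lambda>x. C.E x t) \<le> exp (- \<delta> * t) ^ 2 * C2 * C.B2"
        by (simp add: power2_eq_square exp_add[symmetric] mult.assoc)
      have "L2norm (\<lambda>x. C.E x t) = sqrt (ip (\<lambda>x. C.E x t) (\<lambda>x. C.E x t))" by (rule L2norm_ip)
      also have "\<dots> \<le> sqrt (exp (- \<delta> * t) ^ 2 * C2 * C.B2)" using ipb2 by simp
      also have "\<dots> = exp (- \<delta> * t) * M2 * sqrt C.B2"
        unfolding M2_def by (simp add: real_sqrt_mult)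
      also have "sqrt C.B2 = L2norm e0" by (simp add: C.B2_def L2norm_ip)
      finally show "L2norm (\<lambda>x. C.E x t) \<le> M2 * exp (- \<delta> * t) * L2norm e0" by (simp add: mult.commute mult.left_commute)
    qed
  qed
qed

end
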